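(* Let $F$ be a field of characteristic $0$. For $n=2$ and $n=3$, the algebra $T_n$ is generated by the odd power sums $p_{2k+1}$ ($k\ge 0$), and the proper products form a linear basis of $T_n$. Concretely: for $n=2$ the proper products are $p_1^{c}\,p_{2m+1}^{e}$ with $c\ge 0$, $e\in\{0,1\}$, $m\ge 1$; for $n=3$ they are $p_1^{c_1}p_3^{c_3}\,p_{2m+1}^{e}$ with $c_1,c_3\ge 0$, $e\in\{0,1\}$, $m\ge 2$.
   Context: $p_k=x_1^k+\dots+x_n^k$. A polynomial in $F[x_1,\dots,x_n]$ is monotypically supersymmetric if it is symmetric and, after substituting $x_1=t,\ x_2=-t$, the result does not depend on $t$; $T_n$ is the algebra of such polynomials. In general, with $i=\lfloor n/2\rfloor$, $j=\lfloor (n-1)/2\rfloor$, a proper product is $p_1^{c_1}p_3^{c_3}\cdots p_{2j+1}^{c_{2j+1}}p_{2m_1+1}\cdots p_{2m_{i'}+1}$ with $c$'s $\ge 0$, $i'\le i$, and all $m_k>j$. *)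

theory Defs
  imports "HOL-Library.Poly_Mapping" "HOL-Combinatorics.Permutations"
begin

text \<open>Multivariate polynomials over 'a: finitely supported maps from monomials
  (finitely supported exponent vectors) to coefficients.  Variable x_(i+1) is index i.\<close>

type_synonym 'a mpoly = "(nat \<Rightarrow>\<^sub>0 nat) \<Rightarrow>\<^sub>0 'a"

definition Var :: "nat \<Rightarrow> 'a::comm_ring_1 mpoly" where
  "Var i = Poly_Mapping.single (Poly_Mapping.single i 1) 1"

definition Const :: "'a::comm_ring_1 \<Rightarrow> 'a mpoly" where
  "Const c = Poly_Mapping.single 0 c"

definition in_vars :: "nat \<Rightarrow> 'a::comm_ring_1 mpoly \<Rightarrow> bool" where
  "in_vars n p \<longleftrightarrow> (\<forall>m\<in>Poly_Mapping.keys p. Poly_Mapping.keys m \<subseteq> {..<n})"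

definition psum :: "nat \<Rightarrow> nat \<Rightarrow> 'a::comm_ring_1 mpoly" where
  "psum n k = (\<Sum>i<n. Var i ^ k)"

definition symmetric_poly :: "nat \<Rightarrow> 'a::comm_ring_1 mpoly \<Rightarrow> bool" where
  "symmetric_poly n p \<longleftrightarrow>
     (\<forall>\<sigma>. \<sigma> permutes {..<n} \<longrightarrow>
        (\<forall>m. Poly_Mapping.lookup p (Poly_Mapping.map_key \<sigma> m) = Poly_Mapping.lookup p m))"

text \<open>substitution x_1 := t, x_2 := -t; the new variable t is stored in slot 0\<close>
definition subst_t :: "'a::comm_ring_1 mpoly \<Rightarrow> 'a mpoly" where
  "subst_t p = (\<Sum>m\<in>Poly_Mapping.keys p.
      Poly_Mapping.single
        (Poly_Mapping.update 0 (Poly_Mapping.lookup m 0 + Poly_Mapping.lookup m 1)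
          (Poly_Mapping.update 1 0 m))
        ((-1) ^ Poly_Mapping.lookup m 1 * Poly_Mapping.lookup p m))"

definition indep_t :: "'a::comm_ring_1 mpoly \<Rightarrow> bool" where
  "indep_t q \<longleftrightarrow> (\<forall>m\<in>Poly_Mapping.keys q. Poly_Mapping.lookup m 0 = 0)"

definition mono_supersym :: "nat \<Rightarrow> 'a::comm_ring_1 mpoly \<Rightarrow> bool" where
  "mono_supersym n p \<longleftrightarrow> symmetric_poly n p \<and> indep_t (subst_t p)"

definition T :: "nat \<Rightarrow> 'a::comm_ring_1 mpoly set" where
  "T n = {p. in_vars n p \<and> mono_supersym n p}"

inductive_set subalg :: "'a::comm_ring_1 mpoly set \<Rightarrow> 'a mpoly set" for G where
  const: "Const c \<in> subalg G"
| gen: "g \<in> G \<Longrightarrow> g \<in> subalg G"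
| add: "p \<in> subalg G \<Longrightarrow> q \<in> subalg G \<Longrightarrow> p + q \<in> subalg G"
| mult: "p \<in> subalg G \<Longrightarrow> q \<in> subalg G \<Longrightarrow> p * q \<in> subalg G"

definition is_basis :: "'i set \<Rightarrow> ('i \<Rightarrow> 'a::comm_ring_1 mpoly) \<Rightarrow> 'a mpoly set \<Rightarrow> bool" where
  "is_basis I b S \<longleftrightarrow> b ` I \<subseteq> S \<and>
     (\<forall>p\<in>S. \<exists>!a. (\<forall>i. i \<notin> I \<longrightarrow> a i = 0) \<and> finite {i. a i \<noteq> 0} \<and>
                p = (\<Sum>i\<in>{i. a i \<noteq> 0}. Const (a i) * b i))"

text \<open>proper products for n = 2: p_1^c (None), p_1^c p_(2m+1) with m \<ge> 1 (Some m)\<close>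
definition proper_idx2 :: "(nat \<times> nat option) set" where
  "proper_idx2 = {(c, e). case e of None \<Rightarrow> True | Some m \<Rightarrow> m \<ge> 1}"

definition proper2 :: "nat \<times> nat option \<Rightarrow> 'a::comm_ring_1 mpoly" where
  "proper2 = (\<lambda>(c, e). psum 2 1 ^ c *
      (case e of None \<Rightarrow> 1 | Some m \<Rightarrow> psum 2 (2*m+1)))"

text \<open>proper products for n = 3: p_1^c1 p_3^c3 (None), times p_(2m+1) with m \<ge> 2 (Some m)\<close>
definition proper_idx3 :: "(nat \<times> nat \<times> nat option) set" where
  "proper_idx3 = {(c1, c3, e). case e of None \<Rightarrow> True | Some m \<Rightarrow> m \<ge> 2}"

definition proper3 :: "nat \<times> nat \<times> nat option \<Rightarrow> 'a::comm_ring_1 mpoly" where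
  "proper3 = (\<lambda>(c1, c3, e). psum 3 1 ^ c1 * psum 3 3 ^ c3 *
      (case e of None \<Rightarrow> 1 | Some m \<Rightarrow> psum 3 (2*m+1)))"

end

theory Submission
  imports Defs "HOL-Library.Product_Lexorder"
begin

abbreviation lkp where "lkp \<equiv> Poly_Mapping.lookup"
abbreviation kys where "kys \<equiv> Poly_Mapping.keys"
abbreviation sgl where "sgl \<equiv> Poly_Mapping.single"

lemma pm_sum_singles: "(\<Sum>k\<in>kys p. sgl k (lkp p k)) = p"
  by (rule poly_mapping_eqI) (auto simp: lookup_sum lookup_single when_def in_keys_iff)

lemma pm_sum_singles_super: "finite S \<Longrightarrow> kys p \<subseteq> S \<Longrightarrow> (\<Sum>k\<in>S. sgl k (lkp p k)) = p"
  by (rule poly_mapping_eqI) (auto simp: lookup_sum lookup_single when_def in_keys_iff)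

lemma Const_0[simp]: "Const 0 = 0" by (simp add: Const_def)
lemma Const_1[simp]: "Const 1 = 1" by (simp add: Const_def)
lemma Const_add: "Const (a + b) = Const a + Const b" by (simp add: Const_def single_add)
lemma Const_mult: "Const (a * b) = Const a * Const b" by (simp add: Const_def mult_single)
lemma Const_minus: "Const (- a) = - Const a" by (simp add: Const_def single_uminus)
lemma Const_diff: "Const (a - b) = Const a - Const b" by (simp add: Const_def single_diff)
lemma Const_single: "Const c * sgl m a = sgl m (c * a)" by (simp add: Const_def mult_single)
lemma Const_sum: "Const (\<Sum>i\<in>S. f i) = (\<Sum>i\<in>S. Const (f i))"
  by (induction S rule: infinite_finite_induct) (auto simp: Const_add)
lemma Const_pow: "Const (a ^ k) = Const a ^ k"
  by (induction k) (auto simp: Const_mult)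
lemma Const_of_nat: "Const (of_nat k) = of_nat k"
  by (induction k) (auto simp: Const_add)
lemma Const_eq_iff[simp]: "Const a = Const b \<longleftrightarrow> a = b"
  unfolding Const_def by (metis lookup_single_eq)
lemma lookup_Const: "lkp (Const c) m = (if m = 0 then c else 0)"
  by (simp add: Const_def lookup_single when_def)

lemma Var_pow: "(Var i :: 'a::comm_ring_1 mpoly) ^ k = sgl (sgl i k) 1"
  by (induction k) (auto simp: Var_def mult_single single_add[symmetric])

lemma prod_singles: "finite S \<Longrightarrow> (\<Prod>i\<in>S. sgl (g i) (1::'a::comm_ring_1)) = sgl (\<Sum>i\<in>S. g i) 1"
  by (induction S rule: finite_induct) (auto simp: mult_single)

definition mmono :: "(nat \<Rightarrow> 'a::comm_ring_1 mpoly) \<Rightarrow> (nat \<Rightarrow>\<^sub>0 nat) \<Rightarrow> 'a mpoly" where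
  "mmono \<phi> m = (\<Prod>i\<in>kys m. \<phi> i ^ lkp m i)"

lemma mono_super: "finite S \<Longrightarrow> kys m \<subseteq> S \<Longrightarrow> mmono \<phi> m = (\<Prod>i\<in>S. \<phi> i ^ lkp m i)"
  unfolding mmono_def by (rule prod.mono_neutral_left) (auto simp: in_keys_iff)

lemma mono_zero[simp]: "mmono \<phi> 0 = 1" by (simp add: mmono_def)

lemma mono_add: "mmono \<phi> (m + m') = mmono \<phi> m * mmono \<phi> m'"
proof -
  let ?S = "kys m \<union> kys m'"
  have "mmono \<phi> (m + m') = (\<Prod>i\<in>?S. \<phi> i ^ lkp (m + m') i)"
    by (rule mono_super) (auto dest: keys_add[THEN subsetD])
  also have "\<dots> = (\<Prod>i\<in>?S. \<phi> i ^ lkp m i) * (\<Prod>i\<in>?S. \<phi> i ^ lkp m' i)"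
    by (simp add: lookup_add power_add prod.distrib)
  also have "\<dots> = mmono \<phi> m * mmono \<phi> m'"
    by (simp add: mono_super[of ?S m] mono_super[of ?S m'])
  finally show ?thesis .
qed

lemma mono_Var: "mmono Var m = sgl m (1::'a::comm_ring_1)"
  unfolding mmono_def Var_pow by (simp add: prod_singles pm_sum_singles)

lemma mono_cong: "(\<And>i. i \<in> kys m \<Longrightarrow> \<phi> i = \<psi> i) \<Longrightarrow> mmono \<phi> m = mmono \<psi> m"
  unfolding mmono_def by (rule prod.cong) auto

definition evp :: "(nat \<Rightarrow> 'a::comm_ring_1 mpoly) \<Rightarrow> 'a mpoly \<Rightarrow> 'a mpoly" where
  "evp \<phi> p = (\<Sum>m\<in>kys p. Const (lkp p m) * mmono \<phi> m)"

lemma eval_super: "finite S \<Longrightarrow> kys p \<subseteq> S \<Longrightarrow> evp \<phi> p = (\<Sum>m\<in>S. Const (lkp p m) * mmono \<phi> m)"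
  unfolding evp_def by (rule sum.mono_neutral_left) (auto simp: in_keys_iff)

lemma eval_add: "evp \<phi> (p + q) = evp \<phi> p + evp \<phi> q"
proof -
  let ?S = "kys p \<union> kys q"
  have "evp \<phi> (p + q) = (\<Sum>m\<in>?S. Const (lkp (p+q) m) * mmono \<phi> m)"
    by (rule eval_super) (auto dest: keys_add[THEN subsetD])
  also have "\<dots> = (\<Sum>m\<in>?S. Const (lkp p m) * mmono \<phi> m) + (\<Sum>m\<in>?S. Const (lkp q m) * mmono \<phi> m)"
    by (simp add: lookup_add Const_add distrib_right sum.distrib)
  also have "\<dots> = evp \<phi> p + evp \<phi> q" by (simp add: eval_super[of ?S p] eval_super[of ?S q])
  finally show ?thesis .
qed

lemma eval_0[simp]: "evp \<phi> 0 = 0" by (simp add: evp_def)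

lemma eval_sum: "evp \<phi> (\<Sum>i\<in>S. f i) = (\<Sum>i\<in>S. evp \<phi> (f i))"
  by (induction S rule: infinite_finite_induct) (auto simp: eval_add)

lemma eval_single: "evp \<phi> (sgl m a) = Const a * mmono \<phi> m"
  by (cases "a = 0") (auto simp: evp_def)

lemma eval_mult: "evp \<phi> (p * q) = evp \<phi> p * evp \<phi> q"
proof -
  have "p * q = (\<Sum>m\<in>kys p. sgl m (lkp p m)) * (\<Sum>n\<in>kys q. sgl n (lkp q n))"
    by (simp add: pm_sum_singles)
  also have "\<dots> = (\<Sum>m\<in>kys p. \<Sum>n\<in>kys q. sgl (m + n) (lkp p m * lkp q n))"
    by (simp add: sum_product mult_single)
  finally have "evp \<phi> (p * q) = (\<Sum>m\<in>kys p. \<Sum>n\<in>kys q. Const (lkp p m * lkp q n) * mmono \<phi> (m + n))"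
    by (simp add: eval_sum eval_single)
  also have "\<dots> = (\<Sum>m\<in>kys p. Const (lkp p m) * mmono \<phi> m) * (\<Sum>n\<in>kys q. Const (lkp q n) * mmono \<phi> n)"
    by (simp add: sum_product mono_add Const_mult mult_ac)
  finally show ?thesis by (simp add: evp_def)
qed

lemma eval_Const[simp]: "evp \<phi> (Const c) = Const c"
  by (simp add: Const_def eval_single)

lemma eval_1[simp]: "evp \<phi> 1 = 1"
  using eval_Const[of \<phi> 1] by simp

lemma eval_Var[simp]: "evp \<phi> (Var i) = \<phi> i"
  by (simp add: Var_def eval_single mmono_def)

lemma eval_uminus: "evp \<phi> (- p) = - evp \<phi> p"
  using eval_add[of \<phi> "-p" p] by (simp add: eq_neg_iff_add_eq_0)

lemma eval_diff: "evp \<phi> (p - q) = evp \<phi> p - evp \<phi> q"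
  using eval_add[of \<phi> p "-q"] by (simp add: eval_uminus)

lemma eval_pow: "evp \<phi> (p ^ k) = evp \<phi> p ^ k"
  by (induction k) (auto simp: eval_mult)

lemma eval_prod: "evp \<phi> (\<Prod>i\<in>S. f i) = (\<Prod>i\<in>S. evp \<phi> (f i))"
  by (induction S rule: infinite_finite_induct) (auto simp: eval_mult)

lemma eval_of_nat: "evp \<phi> (of_nat k) = of_nat k"
  by (induction k) (auto simp: eval_add)

lemma eval_numeral[simp]: "evp \<phi> (numeral k) = numeral k"
  using eval_of_nat[of \<phi> "numeral k"] by simp

lemma eval_Var_id: "evp Var p = p"
  unfolding evp_def mono_Var by (simp add: Const_single pm_sum_singles)

lemma eval_mono: "evp \<psi> (mmono \<phi> m) = mmono (\<lambda>i. evp \<psi> (\<phi> i)) m"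
  by (simp add: mmono_def eval_prod eval_pow)

lemma eval_eval: "evp \<psi> (evp \<phi> p) = evp (\<lambda>i. evp \<psi> (\<phi> i)) p"
  unfolding evp_def[of \<phi> p] evp_def[of "\<lambda>i. evp \<psi> (\<phi> i)" p]
  by (simp add: eval_sum eval_mult eval_mono)

lemma eval_cong: "(\<And>m i. m \<in> kys p \<Longrightarrow> i \<in> kys m \<Longrightarrow> \<phi> i = \<psi> i) \<Longrightarrow> evp \<phi> p = evp \<psi> p"
  unfolding evp_def by (rule sum.cong) (auto intro!: arg_cong2[where f="(*)"] mono_cong)

lemma eval_cong_vars: "in_vars n p \<Longrightarrow> (\<And>i. i < n \<Longrightarrow> \<phi> i = \<psi> i) \<Longrightarrow> evp \<phi> p = evp \<psi> p"
  by (rule eval_cong) (auto simp: in_vars_def)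


definition hom :: "('a::comm_ring_1 mpoly \<Rightarrow> 'a mpoly) \<Rightarrow> bool" where
  "hom h \<longleftrightarrow> (\<forall>p q. h (p + q) = h p + h q) \<and> (\<forall>p q. h (p * q) = h p * h q) \<and> (\<forall>c. h (Const c) = Const c)"

lemma hom_eval_map: "hom (evp \<phi>)"
  by (simp add: hom_def eval_add eval_mult)

lemma hom_add: "hom h \<Longrightarrow> h (p + q) = h p + h q" by (simp add: hom_def)
lemma hom_mult: "hom h \<Longrightarrow> h (p * q) = h p * h q" by (simp add: hom_def)
lemma hom_Const: "hom h \<Longrightarrow> h (Const c) = Const c" by (simp add: hom_def)
lemma hom_1: "hom h \<Longrightarrow> h 1 = 1" using hom_Const[of h 1] by simp
lemma hom_0: "hom h \<Longrightarrow> h 0 = 0" using hom_Const[of h 0] by simp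
lemma hom_sum: "hom h \<Longrightarrow> h (\<Sum>i\<in>S. f i) = (\<Sum>i\<in>S. h (f i))"
  by (induction S rule: infinite_finite_induct) (auto simp: hom_add hom_0)
lemma hom_prod: "hom h \<Longrightarrow> h (\<Prod>i\<in>S. f i) = (\<Prod>i\<in>S. h (f i))"
  by (induction S rule: infinite_finite_induct) (auto simp: hom_mult hom_1)
lemma hom_pow: "hom h \<Longrightarrow> h (p ^ k) = h p ^ k"
  by (induction k) (auto simp: hom_mult hom_1)
lemma hom_uminus: "hom h \<Longrightarrow> h (- p) = - h p"
  using hom_add[of h "-p" p] hom_0[of h] by (simp add: eq_neg_iff_add_eq_0)
lemma hom_diff: "hom h \<Longrightarrow> h (p - q) = h p - h q"
  using hom_add[of h p "-q"] by (simp add: hom_uminus)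

lemma hom_is_eval: "hom h \<Longrightarrow> h p = evp (\<lambda>i. h (Var i)) p"
proof -
  assume h: "hom h"
  have "h p = h (evp Var p)" by (simp add: eval_Var_id)
  also have "\<dots> = evp (\<lambda>i. h (Var i)) p"
    unfolding evp_def by (simp add: h hom_sum hom_mult hom_Const mmono_def hom_prod hom_pow)
  finally show ?thesis .
qed

lemma hom_from_singles:
  assumes add: "\<And>p q. h (p + q) = h p + h q"
    and sm: "\<And>m a m' b. h (sgl m a * sgl m' b) = h (sgl m a) * h (sgl m' b)"
    and c: "\<And>c. h (Const c) = Const c"
  shows "hom h"
proof -
  have h0: "h 0 = 0" using add[of 0 0] by simp
  have hs: "h (\<Sum>i\<in>S. f i) = (\<Sum>i\<in>S. h (f i))" for S and f :: "'b \<Rightarrow> _"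
    by (induction S rule: infinite_finite_induct) (auto simp: add h0)
  have "h (p * q) = h p * h q" for p q
  proof -
    have "p * q = (\<Sum>m\<in>kys p. \<Sum>n\<in>kys q. sgl m (lkp p m) * sgl n (lkp q n))"
      by (subst (1) pm_sum_singles[symmetric, of p], subst (1) pm_sum_singles[symmetric, of q])
         (simp add: sum_product)
    then have "h (p * q) = (\<Sum>m\<in>kys p. \<Sum>n\<in>kys q. h (sgl m (lkp p m)) * h (sgl n (lkp q n)))"
      by (simp add: hs sm)
    also have "\<dots> = h (\<Sum>m\<in>kys p. sgl m (lkp p m)) * h (\<Sum>n\<in>kys q. sgl n (lkp q n))"
      by (simp add: hs sum_product)
    finally show ?thesis by (simp add: pm_sum_singles)
  qed
  then show ?thesis using add c by (simp add: hom_def)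
qed

lemma in_vars_add: "in_vars n p \<Longrightarrow> in_vars n q \<Longrightarrow> in_vars n (p + q)"
proof (unfold in_vars_def, intro ballI)
  fix m assume "\<forall>m\<in>kys p. kys m \<subseteq> {..<n}" "\<forall>m\<in>kys q. kys m \<subseteq> {..<n}" "m \<in> kys (p + q)"
  moreover have "m \<in> kys p \<union> kys q" using keys_add[of p q] \<open>m \<in> kys (p + q)\<close> by (rule subsetD)
  ultimately show "kys m \<subseteq> {..<n}" by auto
qed
lemma keys_add_mono: "i \<in> kys (m + m') \<Longrightarrow> i \<in> kys m \<or> i \<in> kys (m'::nat \<Rightarrow>\<^sub>0 nat)"
  using keys_add[of m m'] by auto


lemma in_vars_mult: "in_vars n p \<Longrightarrow> in_vars n q \<Longrightarrow> in_vars n (p * q)"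
proof (unfold in_vars_def, intro ballI)
  fix m assume p: "\<forall>m\<in>kys p. kys m \<subseteq> {..<n}" and q: "\<forall>m\<in>kys q. kys m \<subseteq> {..<n}"
    and m: "m \<in> kys (p * q)"
  from keys_mult[THEN subsetD, OF m] obtain a b where ab: "m = a + b" "a \<in> kys p" "b \<in> kys q" by blast
  show "kys m \<subseteq> {..<n}"
  proof
    fix i assume "i \<in> kys m"
    then have "i \<in> kys a \<or> i \<in> kys b" using ab(1) keys_add_mono by blast
    then show "i \<in> {..<n}" using p q ab by blast
  qed
qed

lemma in_vars_Const: "in_vars n (Const c)"
  by (simp add: in_vars_def Const_def)
lemma in_vars_0: "in_vars n 0" by (simp add: in_vars_def)
lemma in_vars_1: "in_vars n 1" using in_vars_Const[of n 1] by simp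
lemma in_vars_Var: "i < n \<Longrightarrow> in_vars n (Var i)"
  by (simp add: in_vars_def Var_def)
lemma in_vars_uminus: "in_vars n p \<Longrightarrow> in_vars n (- p)"
  by (simp add: in_vars_def)
lemma in_vars_diff: "in_vars n p \<Longrightarrow> in_vars n q \<Longrightarrow> in_vars n (p - q)"
  unfolding diff_conv_add_uminus by (intro in_vars_add in_vars_uminus)
lemma in_vars_pow: "in_vars n p \<Longrightarrow> in_vars n (p ^ k)"
  by (induction k) (auto simp: in_vars_1 in_vars_mult)
lemma in_vars_sum: "(\<And>i. i \<in> S \<Longrightarrow> in_vars n (f i)) \<Longrightarrow> in_vars n (\<Sum>i\<in>S. f i)"
  by (induction S rule: infinite_finite_induct) (auto simp: in_vars_0 in_vars_add)
lemma in_vars_prod: "(\<And>i. i \<in> S \<Longrightarrow> in_vars n (f i)) \<Longrightarrow> in_vars n (\<Prod>i\<in>S. f i)"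
  by (induction S rule: infinite_finite_induct) (auto simp: in_vars_1 in_vars_mult)
lemma in_vars_mono_le: "in_vars n p \<Longrightarrow> n \<le> k \<Longrightarrow> in_vars k p"
  unfolding in_vars_def by (meson lessThan_subset_iff order_trans)

lemma in_vars_eval: "in_vars k p \<Longrightarrow> (\<And>i. i < k \<Longrightarrow> in_vars n (\<phi> i)) \<Longrightarrow> in_vars n (evp \<phi> p)"
  unfolding evp_def mmono_def
  apply (rule in_vars_sum)
  apply (rule in_vars_mult[OF in_vars_Const])
  apply (rule in_vars_prod)
  apply (rule in_vars_pow)
  apply (unfold in_vars_def)
  by blast

lemma in_vars_psum: "in_vars n (psum n k)"
  unfolding psum_def by (auto intro!: in_vars_sum in_vars_pow in_vars_Var)

definition fT :: "(nat \<Rightarrow>\<^sub>0 nat) \<Rightarrow> (nat \<Rightarrow>\<^sub>0 nat)" where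
  "fT m = Poly_Mapping.update 0 (lkp m 0 + lkp m 1) (Poly_Mapping.update 1 0 m)"

lemma lookup_fT: "lkp (fT m) i = (if i = 0 then lkp m 0 + lkp m 1 else if i = 1 then 0 else lkp m i)"
  by (simp add: fT_def lookup_update)

lemma fT_add: "fT (m + m') = fT m + fT m'"
  by (rule poly_mapping_eqI) (simp add: lookup_fT lookup_add)

lemma fT_0: "fT 0 = 0"
  by (rule poly_mapping_eqI) (simp add: lookup_fT)

lemma subst_t_alt: "subst_t p = (\<Sum>m\<in>kys p. sgl (fT m) ((-1) ^ lkp m 1 * lkp p m))"
  by (simp add: subst_t_def fT_def)

lemma subst_t_super: "finite S \<Longrightarrow> kys p \<subseteq> S \<Longrightarrow> subst_t p = (\<Sum>m\<in>S. sgl (fT m) ((-1) ^ lkp m 1 * lkp p m))"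
  unfolding subst_t_alt by (rule sum.mono_neutral_left) (auto simp: in_keys_iff)

lemma subst_t_add: "subst_t (p + q) = subst_t p + subst_t q"
proof -
  let ?S = "kys p \<union> kys q"
  have "subst_t (p + q) = (\<Sum>m\<in>?S. sgl (fT m) ((-1) ^ lkp m 1 * lkp (p+q) m))"
    by (rule subst_t_super) (auto dest: keys_add[THEN subsetD])
  also have "\<dots> = subst_t p + subst_t q"
    by (simp add: subst_t_super[of ?S p] subst_t_super[of ?S q] lookup_add distrib_left single_add sum.distrib)
  finally show ?thesis .
qed

lemma subst_t_single: "subst_t (sgl m a) = sgl (fT m) ((-1) ^ lkp m 1 * a)"
  by (cases "a = 0") (auto simp: subst_t_alt)

lemma hom_subst_t: "hom subst_t"
  apply (rule hom_from_singles)
    apply (rule subst_t_add)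
   apply (simp add: mult_single subst_t_single fT_add lookup_add power_add mult_ac)
  apply (simp add: Const_def subst_t_single fT_0)
  done

lemma subst_t_Var0: "subst_t (Var 0) = Var 0"
proof -
  have "fT (sgl 0 1) = sgl 0 1"
    by (rule poly_mapping_eqI) (simp add: lookup_fT lookup_single when_def)
  then show ?thesis by (simp add: Var_def subst_t_single lookup_single)
qed

lemma subst_t_Var1: "subst_t (Var 1) = - Var 0"
proof -
  have "fT (sgl 1 1) = sgl 0 1"
    by (rule poly_mapping_eqI) (simp add: lookup_fT lookup_single when_def)
  then show ?thesis by (simp add: Var_def subst_t_single lookup_single single_uminus)
qed

lemma subst_t_Var2: "i \<ge> 2 \<Longrightarrow> subst_t (Var i) = Var i"
proof -
  assume i: "i \<ge> 2"
  have "fT (sgl i 1) = sgl i 1"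
    by (rule poly_mapping_eqI) (use i in \<open>auto simp: lookup_fT lookup_single when_def\<close>)
  then show ?thesis using i by (simp add: Var_def subst_t_single lookup_single)
qed

definition act :: "(nat \<Rightarrow> nat) \<Rightarrow> 'a::comm_ring_1 mpoly \<Rightarrow> 'a mpoly" where
  "act \<sigma> p = (\<Sum>m\<in>kys p. sgl (Poly_Mapping.map_key (inv \<sigma>) m) (lkp p m))"

lemma act_super: "finite S \<Longrightarrow> kys p \<subseteq> S \<Longrightarrow> act \<sigma> p = (\<Sum>m\<in>S. sgl (Poly_Mapping.map_key (inv \<sigma>) m) (lkp p m))"
  unfolding act_def by (rule sum.mono_neutral_left) (auto simp: in_keys_iff)

lemma act_add: "act \<sigma> (p + q) = act \<sigma> p + act \<sigma> q"
proof -
  let ?S = "kys p \<union> kys q"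
  have "act \<sigma> (p + q) = (\<Sum>m\<in>?S. sgl (Poly_Mapping.map_key (inv \<sigma>) m) (lkp (p+q) m))"
    by (rule act_super) (auto dest: keys_add[THEN subsetD])
  also have "\<dots> = act \<sigma> p + act \<sigma> q"
    by (simp add: act_super[of ?S p] act_super[of ?S q] lookup_add single_add sum.distrib)
  finally show ?thesis .
qed

lemma act_single: "act \<sigma> (sgl m a) = sgl (Poly_Mapping.map_key (inv \<sigma>) m) a"
  by (cases "a = 0") (auto simp: act_def)

lemma hom_act: "bij \<sigma> \<Longrightarrow> hom (act \<sigma>)"
proof -
  assume b: "bij \<sigma>"
  then have ii: "inj (inv \<sigma>)" by (simp add: bij_imp_bij_inv bij_is_inj)
  show ?thesis
    apply (rule hom_from_singles)
      apply (rule act_add)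
     apply (simp add: mult_single act_single map_key_plus[OF ii])
    apply (simp add: Const_def act_single map_key_zero[OF ii])
    done
qed

lemma act_Var: "bij \<sigma> \<Longrightarrow> act \<sigma> (Var i) = Var (\<sigma> i)"
proof -
  assume b: "bij \<sigma>"
  then have ii: "inj (inv \<sigma>)" by (simp add: bij_imp_bij_inv bij_is_inj)
  have "Poly_Mapping.map_key (inv \<sigma>) (sgl i 1) = sgl (\<sigma> i) (1::nat)"
    using map_key_single[OF ii, of "\<sigma> i" "1::nat"] by (simp add: inv_f_f[OF bij_is_inj[OF b]])
  then show ?thesis unfolding Var_def act_single by (metis One_nat_def)
qed

lemma lookup_act: "bij \<sigma> \<Longrightarrow> lkp (act \<sigma> p) m = lkp p (Poly_Mapping.map_key \<sigma> m)"
proof -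
  assume b: "bij \<sigma>"
  then have ii: "inj (inv \<sigma>)" and i: "inj \<sigma>" by (simp_all add: bij_imp_bij_inv bij_is_inj)
  have eq: "Poly_Mapping.map_key (inv \<sigma>) m' = m \<longleftrightarrow> m' = Poly_Mapping.map_key \<sigma> m" for m'
  proof -
    have "Poly_Mapping.map_key (inv \<sigma>) m' = m \<longleftrightarrow> (\<forall>j. lkp m' (inv \<sigma> j) = lkp m j)"
      by (simp add: poly_mapping_eq_iff map_key.rep_eq[OF ii] fun_eq_iff)
    also have "\<dots> \<longleftrightarrow> (\<forall>j. lkp m' j = lkp m (\<sigma> j))"
      by (metis b bij_inv_eq_iff)
    also have "\<dots> \<longleftrightarrow> m' = Poly_Mapping.map_key \<sigma> m"
      by (simp add: poly_mapping_eq_iff map_key.rep_eq[OF i] fun_eq_iff)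
    finally show ?thesis .
  qed
  show ?thesis
    unfolding act_def lookup_sum
    by (auto simp: lookup_single when_def eq in_keys_iff)
qed

lemma symmetric_act: "symmetric_poly n p \<longleftrightarrow> (\<forall>\<sigma>. \<sigma> permutes {..<n} \<longrightarrow> act \<sigma> p = p)"
  unfolding symmetric_poly_def
  by (auto simp: poly_mapping_eq_iff lookup_act permutes_bij fun_eq_iff)

lemma act_psum: "\<sigma> permutes {..<n} \<Longrightarrow> act \<sigma> (psum n k) = psum n k"
proof -
  assume s: "\<sigma> permutes {..<n}"
  then have b: "bij \<sigma>" by (rule permutes_bij)
  have "act \<sigma> (psum n k) = (\<Sum>i<n. Var (\<sigma> i) ^ k)"
    by (simp add: psum_def hom_sum[OF hom_act[OF b]] hom_pow[OF hom_act[OF b]] act_Var[OF b])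
  also have "\<dots> = psum n k" unfolding psum_def
    using sum.permute[OF s, of "\<lambda>i. Var i ^ k"] unfolding comp_def by (rule sym)
  finally show ?thesis .
qed


lemma indep_add: "indep_t p \<Longrightarrow> indep_t q \<Longrightarrow> indep_t (p + q)"
proof (unfold indep_t_def, intro ballI)
  fix m assume "\<forall>m\<in>kys p. lkp m 0 = 0" "\<forall>m\<in>kys q. lkp m 0 = 0" "m \<in> kys (p + q)"
  moreover have "m \<in> kys p \<union> kys q" using keys_add[of p q] \<open>m \<in> kys (p + q)\<close> by (rule subsetD)
  ultimately show "lkp m 0 = 0" by auto
qed

lemma indep_mult: "indep_t p \<Longrightarrow> indep_t q \<Longrightarrow> indep_t (p * q)"
proof (unfold indep_t_def, intro ballI)
  fix m assume p: "\<forall>m\<in>kys p. lkp m 0 = 0" and q: "\<forall>m\<in>kys q. lkp m 0 = 0" and m: "m \<in> kys (p * q)"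
  from keys_mult[THEN subsetD, OF m] obtain a b where ab: "m = a + b" "a \<in> kys p" "b \<in> kys q" by blast
  then show "lkp m 0 = 0" using p q by (simp add: lookup_add)
qed

lemma indep_Const: "indep_t (Const c)"
  by (simp add: indep_t_def Const_def)

lemma indep_sum: "(\<And>i. i \<in> S \<Longrightarrow> indep_t (f i)) \<Longrightarrow> indep_t (\<Sum>i\<in>S. f i)"
  by (induction S rule: infinite_finite_induct) (auto intro: indep_add simp: indep_Const[of 0, simplified])

lemma sym_add: "symmetric_poly n p \<Longrightarrow> symmetric_poly n q \<Longrightarrow> symmetric_poly n (p + q)"
  by (simp add: symmetric_poly_def lookup_add)
lemma sym_diff: "symmetric_poly n p \<Longrightarrow> symmetric_poly n q \<Longrightarrow> symmetric_poly n (p - q)"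
  by (simp add: symmetric_poly_def lookup_minus)
lemma sym_mult: "symmetric_poly n p \<Longrightarrow> symmetric_poly n q \<Longrightarrow> symmetric_poly n (p * q)"
  by (simp add: symmetric_act hom_mult[OF hom_act] permutes_bij)
lemma sym_Const: "symmetric_poly n (Const c)"
  by (simp add: symmetric_act hom_Const[OF hom_act] permutes_bij)
lemma sym_psum: "symmetric_poly n (psum n k)"
  by (simp add: symmetric_act act_psum)

lemma T_add: "p \<in> T n \<Longrightarrow> q \<in> T n \<Longrightarrow> p + q \<in> T n"
  by (simp add: T_def mono_supersym_def in_vars_add sym_add hom_add[OF hom_subst_t] indep_add)
lemma T_mult: "p \<in> T n \<Longrightarrow> q \<in> T n \<Longrightarrow> p * q \<in> T n"
  by (simp add: T_def mono_supersym_def in_vars_mult sym_mult hom_mult[OF hom_subst_t] indep_mult)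
lemma T_Const: "Const c \<in> T n"
  by (simp add: T_def mono_supersym_def in_vars_Const sym_Const hom_Const[OF hom_subst_t] indep_Const)

lemma psum2: "psum 2 k = Var 0 ^ k + Var 1 ^ k"
  by (simp add: psum_def numeral_2_eq_2 lessThan_Suc)
lemma psum3: "psum 3 k = Var 0 ^ k + Var 1 ^ k + Var 2 ^ k"
  by (simp add: psum_def numeral_3_eq_3 numeral_2_eq_2 lessThan_Suc)

lemma indep_Var_pow: "i \<noteq> 0 \<Longrightarrow> indep_t (Var i ^ k)"
  by (simp add: Var_pow indep_t_def lookup_single)

lemma psum_T: "n \<in> {2,3} \<Longrightarrow> psum n (2*k+1) \<in> T n"
proof -
  assume n: "n \<in> {2,3}"
  have odd: "(- Var 0 :: 'a mpoly) ^ (2*k+1) = - (Var 0 ^ (2*k+1))"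
    by (simp add: power_minus_odd)
  have h2: "subst_t (psum 2 (2*k+1) :: 'a mpoly) = Var 0 ^ (2*k+1) + (- Var 0) ^ (2*k+1)"
    by (simp only: psum2 hom_add[OF hom_subst_t] hom_pow[OF hom_subst_t] subst_t_Var0 subst_t_Var1)
  have h3: "subst_t (psum 3 (2*k+1) :: 'a mpoly) = Var 0 ^ (2*k+1) + (- Var 0) ^ (2*k+1) + Var 2 ^ (2*k+1)"
    by (simp only: psum3 hom_add[OF hom_subst_t] hom_pow[OF hom_subst_t] subst_t_Var0 subst_t_Var1 subst_t_Var2[of 2, simplified])
  have "indep_t (subst_t (psum n (2*k+1) :: 'a mpoly))"
  proof (cases "n = 2")
    case True
    have "subst_t (psum n (2*k+1) :: 'a mpoly) = 0" unfolding True h2 odd by simp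
    then show ?thesis using indep_Const[of 0] by simp
  next
    case False
    then have "n = 3" using n by auto
    then have "subst_t (psum n (2*k+1) :: 'a mpoly) = Var 2 ^ (2*k+1)" using h3 odd by simp
    then show ?thesis using indep_Var_pow[of 2 "2*k+1"] by simp
  qed
  then show ?thesis
    by (simp add: T_def mono_supersym_def in_vars_psum sym_psum)
qed

lemma subalg_T: "p \<in> subalg (range (\<lambda>k. psum n (2*k+1))) \<Longrightarrow> n \<in> {2,3} \<Longrightarrow> (p :: 'a::comm_ring_1 mpoly) \<in> T n"
  by (induction p rule: subalg.induct) (auto simp: T_add T_mult T_Const intro: psum_T[simplified])

lemma subalg_sum: "(\<And>i. i \<in> S \<Longrightarrow> f i \<in> subalg G) \<Longrightarrow> (\<Sum>i\<in>S. f i) \<in> subalg G"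
proof (induction S rule: infinite_finite_induct)
  case (infinite A) then show ?case using subalg.const[of 0 G] by simp
next
  case empty then show ?case using subalg.const[of 0 G] by simp
next
  case (insert x F) then show ?case by (simp add: subalg.add)
qed

lemma subalg_pow: "p \<in> subalg G \<Longrightarrow> p ^ k \<in> subalg G"
  by (induction k) (auto intro: subalg.mult subalg.const[of 1, simplified])


lemma hom_eval_comp: "hom h \<Longrightarrow> h (evp \<phi> p) = evp (\<lambda>i. h (\<phi> i)) p"
proof -
  assume h: "hom h"
  have "h (evp \<phi> p) = evp (\<lambda>i. h (Var i)) (evp \<phi> p)" by (rule hom_is_eval[OF h])
  also have "\<dots> = evp (\<lambda>i. evp (\<lambda>j. h (Var j)) (\<phi> i)) p" by (rule eval_eval)
  also have "\<dots> = evp (\<lambda>i. h (\<phi> i)) p" by (simp add: hom_is_eval[OF h, symmetric])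
  finally show ?thesis .
qed

lemma eval_eval': "evp \<psi> (evp \<phi> p) = evp (\<lambda>i. evp \<psi> (\<phi> i)) p"
  by (rule eval_eval)

definition rph :: "nat \<Rightarrow> nat \<Rightarrow> 'a::comm_ring_1 mpoly" where
  "rph j i = (if i = j then 0 else Var i)"

lemma mono_rph: "mmono (rph j) \<mu> = (if lkp \<mu> j = 0 then sgl \<mu> 1 else 0)"
proof (cases "lkp \<mu> j = 0")
  case True
  then have "mmono (rph j) \<mu> = mmono Var \<mu>" by (intro mono_cong) (auto simp: rph_def in_keys_iff)
  then show ?thesis using True by (simp add: mono_Var)
next
  case False
  then have j: "j \<in> kys \<mu>" by (simp add: in_keys_iff)
  have "mmono (rph j) \<mu> = 0" unfolding mmono_def
    by (rule prod_zero) (use j False in \<open>auto intro!: bexI[of _ j] simp: rph_def power_0_left\<close>)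
  then show ?thesis using False by simp
qed

lemma rho_alt: "evp (rph j) p = (\<Sum>\<mu>\<in>kys p. sgl \<mu> (if lkp \<mu> j = 0 then lkp p \<mu> else 0))"
  unfolding evp_def by (rule sum.cong) (auto simp: mono_rph Const_single)

lemma lookup_rho: "lkp (evp (rph j) p) m = (if lkp m j = 0 then lkp p m else 0)"
proof -
  have "lkp (evp (rph j) p) m = (\<Sum>\<mu>\<in>kys p. if \<mu> = m then (if lkp \<mu> j = 0 then lkp p \<mu> else 0) else 0)"
    unfolding rho_alt lookup_sum by (rule sum.cong) (auto simp: lookup_single when_def)
  also have "\<dots> = (if lkp m j = 0 then lkp p m else 0)"
    by (simp add: in_keys_iff)
  finally show ?thesis .
qed

lemma rho_Var: "evp (rph j) (Var i) = (if i = j then 0 else Var i)"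
  by (simp add: rph_def)

definition bdd :: "nat \<Rightarrow> 'a::comm_ring_1 mpoly \<Rightarrow> bool" where
  "bdd k p \<longleftrightarrow> (\<forall>m\<in>kys p. \<forall>i. lkp m i \<le> k)"

lemma bdd_add: "bdd k p \<Longrightarrow> bdd k q \<Longrightarrow> bdd k (p + q)"
proof (unfold bdd_def, intro ballI)
  fix m assume "\<forall>m\<in>kys p. \<forall>i. lkp m i \<le> k" "\<forall>m\<in>kys q. \<forall>i. lkp m i \<le> k" "m \<in> kys (p + q)"
  moreover have "m \<in> kys p \<union> kys q" using keys_add[of p q] \<open>m \<in> kys (p + q)\<close> by (rule subsetD)
  ultimately show "\<forall>i. lkp m i \<le> k" by auto
qed

lemma bdd_uminus: "bdd k p \<Longrightarrow> bdd k (- p)" by (simp add: bdd_def)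
lemma bdd_diff: "bdd k p \<Longrightarrow> bdd k q \<Longrightarrow> bdd k (p - q)"
  unfolding diff_conv_add_uminus by (intro bdd_add bdd_uminus)

lemma bdd_mult: "bdd k p \<Longrightarrow> bdd l q \<Longrightarrow> bdd (k + l) (p * q)"
proof (unfold bdd_def, intro ballI)
  fix m assume p: "\<forall>m\<in>kys p. \<forall>i. lkp m i \<le> k" and q: "\<forall>m\<in>kys q. \<forall>i. lkp m i \<le> l" and m: "m \<in> kys (p * q)"
  from keys_mult[THEN subsetD, OF m] obtain a b where ab: "m = a + b" "a \<in> kys p" "b \<in> kys q" by blast
  then show "\<forall>i. lkp m i \<le> k + l" using p q by (simp add: lookup_add add_mono)
qed

lemma bdd_Const: "bdd 0 (Const c)" by (simp add: bdd_def Const_def)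
lemma bdd_0: "bdd k 0" by (simp add: bdd_def)
lemma bdd_le: "bdd k p \<Longrightarrow> k \<le> l \<Longrightarrow> bdd l p"
  unfolding bdd_def using le_trans by blast
lemma bdd_pow: "bdd k p \<Longrightarrow> bdd (k * e) (p ^ e)"
proof (induction e)
  case 0 then show ?case using bdd_Const[of 1] by simp
next
  case (Suc e) then show ?case using bdd_mult[of k p "k*e" "p^e"] by (simp add: add.commute)
qed
lemma bdd_sum: "(\<And>i. i \<in> S \<Longrightarrow> bdd k (f i)) \<Longrightarrow> bdd k (\<Sum>i\<in>S. f i)"
  by (induction S rule: infinite_finite_induct) (auto simp: bdd_0 bdd_add)

lemma bdd_single: "(\<And>i. lkp m i \<le> k) \<Longrightarrow> bdd k (sgl m c)"
  by (simp add: bdd_def)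

definition tdeg_le :: "nat \<Rightarrow> 'a::comm_ring_1 mpoly \<Rightarrow> bool" where
  "tdeg_le k G \<longleftrightarrow> (\<forall>\<mu>\<in>kys G. lkp \<mu> 0 + lkp \<mu> 1 + lkp \<mu> 2 \<le> k)"

lemma tdeg_le_add: "tdeg_le k p \<Longrightarrow> tdeg_le k q \<Longrightarrow> tdeg_le k (p + q)"
proof (unfold tdeg_le_def, intro ballI)
  fix m assume "\<forall>m\<in>kys p. lkp m 0 + lkp m 1 + lkp m 2 \<le> k" "\<forall>m\<in>kys q. lkp m 0 + lkp m 1 + lkp m 2 \<le> k" "m \<in> kys (p + q)"
  moreover have "m \<in> kys p \<union> kys q" using keys_add[of p q] \<open>m \<in> kys (p + q)\<close> by (rule subsetD)
  ultimately show "lkp m 0 + lkp m 1 + lkp m 2 \<le> k" by auto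
qed

lemma tdeg_le_Var_mult: "tdeg_le k p \<Longrightarrow> i < 3 \<Longrightarrow> tdeg_le (Suc k) (Var i * p)"
proof (unfold tdeg_le_def, intro ballI)
  fix m assume p: "\<forall>m\<in>kys p. lkp m 0 + lkp m 1 + lkp m 2 \<le> k" and i: "i < 3" and m: "m \<in> kys (Var i * p)"
  have kv: "kys (Var i * p) \<subseteq> {a + b |a b. a \<in> {sgl i 1} \<and> b \<in> kys p}"
    using keys_mult[of "Var i" p] by (simp add: Var_def)
  from kv m obtain b where ab: "m = sgl i 1 + b" "b \<in> kys p" by blast
  show "lkp m 0 + lkp m 1 + lkp m 2 \<le> Suc k" using ab p[rule_format, of b] i
    by (auto simp: lookup_add lookup_single when_def)
qed

lemma mono3: "kys \<mu> \<subseteq> {..<3} \<Longrightarrow> mmono \<phi> \<mu> = \<phi> 0 ^ lkp \<mu> 0 * \<phi> 1 ^ lkp \<mu> 1 * \<phi> 2 ^ lkp \<mu> 2"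
  by (simp add: mono_super[of "{..<3}"] numeral_3_eq_3 numeral_2_eq_2 lessThan_Suc mult_ac)

lemma bdd_eval3:
  assumes G: "in_vars 3 G" "tdeg_le k G" and ph: "\<And>i. i < 3 \<Longrightarrow> bdd 1 (\<phi> i)"
  shows "bdd k (evp \<phi> G)"
  unfolding evp_def
proof (rule bdd_sum)
  fix \<mu> assume mu: "\<mu> \<in> kys G"
  then have k: "kys \<mu> \<subseteq> {..<3}" using G by (auto simp: in_vars_def)
  have "bdd (0 + (1 * lkp \<mu> 0 + 1 * lkp \<mu> 1 + 1 * lkp \<mu> 2)) (Const (lkp G \<mu>) * (\<phi> 0 ^ lkp \<mu> 0 * \<phi> 1 ^ lkp \<mu> 1 * \<phi> 2 ^ lkp \<mu> 2))"
    by (intro bdd_mult bdd_Const bdd_pow ph) auto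
  then show "bdd k (Const (lkp G \<mu>) * mmono \<phi> \<mu>)"
    using G mu by (auto simp: mono3[OF k] tdeg_le_def elim!: bdd_le)
qed

definition ones :: "nat \<Rightarrow> (nat \<Rightarrow>\<^sub>0 nat)" where "ones n = (\<Sum>i<n. sgl i 1)"

lemma lookup_ones: "lkp (ones n) j = (if j < n then 1 else 0)"
  by (simp add: ones_def lookup_sum lookup_single when_def)

lemma shift:
  fixes h :: "'a::comm_ring_1 mpoly" and \<mu> :: "nat \<Rightarrow>\<^sub>0 nat"
  assumes ge: "\<And>m i. m \<in> kys h \<Longrightarrow> lkp \<mu> i \<le> lkp m i"
  shows "\<exists>h1. h = sgl \<mu> 1 * h1 \<and> (\<forall>\<nu>. lkp h1 \<nu> = lkp h (\<nu> + \<mu>))"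
proof -
  define h1 where "h1 = (\<Sum>m\<in>kys h. sgl (m - \<mu>) (lkp h m))"
  have add: "\<mu> + (m - \<mu>) = m" if "m \<in> kys h" for m
    by (rule poly_mapping_eqI) (use ge[OF that] in \<open>simp add: lookup_add lookup_minus\<close>)
  have "sgl \<mu> 1 * h1 = (\<Sum>m\<in>kys h. sgl m (lkp h m))"
    unfolding h1_def sum_distrib_left by (rule sum.cong) (simp_all add: mult_single add)
  then have 1: "h = sgl \<mu> 1 * h1" by (simp add: pm_sum_singles)
  have eqv: "m - \<mu> = \<nu> \<longleftrightarrow> m = \<nu> + \<mu>" if "m \<in> kys h" for m \<nu>
    using add[OF that] by (metis add.commute add_diff_cancel_left')
  have "lkp h1 \<nu> = lkp h (\<nu> + \<mu>)" for \<nu>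
  proof -
    have "lkp h1 \<nu> = (\<Sum>m\<in>kys h. if m = \<nu> + \<mu> then lkp h m else 0)"
      unfolding h1_def lookup_sum by (rule sum.cong) (auto simp: lookup_single when_def eqv)
    also have "\<dots> = lkp h (\<nu> + \<mu>)" by (simp add: in_keys_iff)
    finally show ?thesis .
  qed
  with 1 show ?thesis by blast
qed

lemma map_key_ones: "\<sigma> permutes {..<n} \<Longrightarrow> Poly_Mapping.map_key \<sigma> (ones n) = ones n"
  by (rule poly_mapping_eqI)
     (simp add: map_key.rep_eq[OF permutes_inj] lookup_ones permutes_in_image[of \<sigma> "{..<n}", simplified])

lemma sym_shift:
  assumes "symmetric_poly n h" "\<And>\<nu>. lkp h1 \<nu> = lkp h (\<nu> + ones n)"
  shows "symmetric_poly n h1"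
  unfolding symmetric_poly_def
proof (intro allI impI)
  fix \<sigma> m assume s: "\<sigma> permutes {..<n}"
  have "Poly_Mapping.map_key \<sigma> m + ones n = Poly_Mapping.map_key \<sigma> (m + ones n)"
    by (simp add: map_key_plus[OF permutes_inj[OF s]] map_key_ones[OF s])
  then show "lkp h1 (Poly_Mapping.map_key \<sigma> m) = lkp h1 m"
    using assms s by (simp add: symmetric_poly_def)
qed

lemma keys_all_ge:
  assumes "symmetric_poly n h" "j < n" "i < n" "m \<in> kys h" "\<And>m. m \<in> kys h \<Longrightarrow> lkp m j \<noteq> 0"
  shows "lkp m i \<noteq> 0"
proof -
  let ?t = "Transposition.transpose i j"
  have t: "?t permutes {..<n}" using assms by (intro permutes_swap_id) auto
  have "lkp h (Poly_Mapping.map_key ?t m) = lkp h m"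
    using assms(1) t by (simp add: symmetric_poly_def)
  then have "Poly_Mapping.map_key ?t m \<in> kys h" using assms(4) by (simp add: in_keys_iff)
  then have "lkp (Poly_Mapping.map_key ?t m) j \<noteq> 0" by (rule assms(5))
  then show ?thesis by (simp add: map_key.rep_eq[OF permutes_inj[OF t]])
qed

lemma sym_eval: "(\<And>i. symmetric_poly n (\<phi> i)) \<Longrightarrow> symmetric_poly n (evp \<phi> G)"
proof -
  assume a: "\<And>i. symmetric_poly n (\<phi> i)"
  show ?thesis unfolding symmetric_act
  proof (intro allI impI)
    fix \<sigma> :: "nat \<Rightarrow> nat" assume s: "\<sigma> permutes {..<n}"
    have "act \<sigma> (evp \<phi> G) = evp (\<lambda>i. act \<sigma> (\<phi> i)) G"
      by (rule hom_eval_comp[OF hom_act[OF permutes_bij[OF s]]])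
    also have "\<dots> = evp \<phi> G" using a s by (simp add: symmetric_act)
    finally show "act \<sigma> (evp \<phi> G) = evp \<phi> G" .
  qed
qed

lemma sym_pow: "symmetric_poly n p \<Longrightarrow> symmetric_poly n (p ^ k)"
  by (induction k) (auto intro: sym_mult sym_Const[of n 1, simplified])

lemma sym_0: "symmetric_poly n 0" by (simp add: symmetric_poly_def)


declare One_nat_def[simp del]

lemma sym_divide:
  fixes h :: "'a::comm_ring_1 mpoly"
  assumes iv: "in_vars n h" and sy: "symmetric_poly n h" and bd: "bdd k h" and j: "j < n"
    and r: "evp (rph j) h = 0"
  shows "\<exists>h1. h = sgl (ones n) 1 * h1 \<and> in_vars n h1 \<and> symmetric_poly n h1 \<and> bdd (k - 1) h1 \<and> (k = 0 \<longrightarrow> h = 0)"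
proof -
  have kj: "lkp m j \<noteq> 0" if "m \<in> kys h" for m
  proof
    assume "lkp m j = 0"
    then have "lkp (evp (rph j) h) m = lkp h m" by (simp add: lookup_rho)
    then show False using r that by (simp add: in_keys_iff)
  qed
  have ki: "lkp m i \<noteq> 0" if "m \<in> kys h" "i < n" for m i
    by (rule keys_all_ge[OF sy j that(2) that(1) kj])
  have iv0: "lkp m i = 0" if "m \<in> kys h" "\<not> i < n" for m i
    using iv that unfolding in_vars_def by (metis in_keys_iff lessThan_iff subsetD)
  have ge: "lkp (ones n) i \<le> lkp m i" if "m \<in> kys h" for m i
    using ki[OF that, of i] by (auto simp: lookup_ones)
  obtain h1 where h1: "h = sgl (ones n) 1 * h1" "\<And>\<nu>. lkp h1 \<nu> = lkp h (\<nu> + ones n)"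
    using shift[of h "ones n", OF ge] by blast
  have kh1: "\<nu> + ones n \<in> kys h" if "\<nu> \<in> kys h1" for \<nu>
    using that h1(2) by (simp add: in_keys_iff)
  have "in_vars n h1"
    unfolding in_vars_def
  proof (intro ballI subsetI)
    fix \<nu> i assume "\<nu> \<in> kys h1" "i \<in> kys \<nu>"
    then have "\<not> \<not> i < n" using iv0[OF kh1, of \<nu> i] by (auto simp: lookup_add in_keys_iff)
    then show "i \<in> {..<n}" by simp
  qed
  moreover have "symmetric_poly n h1" by (rule sym_shift[OF sy h1(2)])
  moreover have "bdd (k - 1) h1"
    unfolding bdd_def
  proof (intro ballI allI)
    fix \<nu> i assume nu: "\<nu> \<in> kys h1"
    have "lkp (\<nu> + ones n) i \<le> k" using bd kh1[OF nu] by (simp add: bdd_def)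
    moreover have "\<not> i < n \<Longrightarrow> lkp (\<nu> + ones n) i = 0" using iv0[OF kh1[OF nu]] by simp
    ultimately show "lkp \<nu> i \<le> k - 1" by (auto simp: lookup_add lookup_ones split: if_splits)
  qed
  moreover have "k = 0 \<longrightarrow> h = 0"
  proof
    assume "k = 0"
    have "kys h = {}"
    proof (rule ccontr)
      assume "kys h \<noteq> {}"
      then obtain m where "m \<in> kys h" by blast
      then show False using kj[of m] bd \<open>k = 0\<close> by (auto simp: bdd_def)
    qed
    then show "h = 0" by simp
  qed
  ultimately show ?thesis using h1 by blast
qed

definition ph2 :: "nat \<Rightarrow> 'a::comm_ring_1 mpoly" where
  "ph2 i = (if i = 0 then Var 0 + Var 1 else if i = 1 then Var 0 * Var 1 else 0)"

definition ph3 :: "nat \<Rightarrow> 'a::comm_ring_1 mpoly" where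
  "ph3 i = (if i = 0 then Var 0 + Var 1 + Var 2 else if i = 1 then Var 0 * Var 1 + Var 0 * Var 2 + Var 1 * Var 2
            else if i = 2 then Var 0 * Var 1 * Var 2 else 0)"

lemma Const_numeral: "Const (numeral k) = numeral k"
  using Const_of_nat[of "numeral k"] by simp

lemma Const_half: "Const (1/2 :: 'a::field_char_0) * 2 = 1"
  by (simp add: Const_numeral[symmetric] Const_mult[symmetric])

lemma Const_sixth: "Const (1/6 :: 'a::field_char_0) * 6 = 1"
  by (simp add: Const_numeral[symmetric] Const_mult[symmetric])

lemma e2_2: "(Var 0 * Var 1 :: 'a::field_char_0 mpoly) = Const (1/2) * (psum 2 1 ^ 2 - psum 2 2)"
proof -
  have "(psum 2 1 ^ 2 - psum 2 2 :: 'a mpoly) = 2 * (Var 0 * Var 1)"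
    by (simp add: psum2 power2_eq_square algebra_simps)
  then show ?thesis by (simp add: mult.assoc[symmetric] Const_half)
qed

lemma e2_3: "(Var 0 * Var 1 + Var 0 * Var 2 + Var 1 * Var 2 :: 'a::field_char_0 mpoly) = Const (1/2) * (psum 3 1 ^ 2 - psum 3 2)"
proof -
  have "(psum 3 1 ^ 2 - psum 3 2 :: 'a mpoly) = 2 * (Var 0 * Var 1 + Var 0 * Var 2 + Var 1 * Var 2)"
    by (simp add: psum3 power2_eq_square algebra_simps)
  then show ?thesis by (simp only: mult.assoc[symmetric] Const_half mult_1_left)
qed

lemma e3_3: "(Var 0 * Var 1 * Var 2 :: 'a::field_char_0 mpoly) = Const (1/6) * (psum 3 1 ^ 3 - 3 * psum 3 1 * psum 3 2 + 2 * psum 3 3)"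
proof -
  have "(psum 3 1 ^ 3 - 3 * psum 3 1 * psum 3 2 + 2 * psum 3 3 :: 'a mpoly) = 6 * (Var 0 * Var 1 * Var 2)"
    unfolding psum3 by algebra
  then show ?thesis by (simp add: mult.assoc[symmetric] Const_sixth)
qed

lemma sym_numeral: "symmetric_poly n (numeral k)"
  using sym_Const[of n "numeral k"] by (simp add: Const_numeral)

lemma p1_2: "(Var 0 + Var 1 :: 'a::comm_ring_1 mpoly) = psum 2 1" by (simp add: psum2)
lemma p1_3: "(Var 0 + Var 1 + Var 2 :: 'a::comm_ring_1 mpoly) = psum 3 1" by (simp add: psum3)

lemma sym_e2_2: "symmetric_poly 2 (Var 0 * Var 1 :: 'a::field_char_0 mpoly)"
  unfolding e2_2 by (intro sym_mult sym_Const sym_diff sym_pow sym_psum)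
lemma sym_e2_3: "symmetric_poly 3 (Var 0 * Var 1 + Var 0 * Var 2 + Var 1 * Var 2 :: 'a::field_char_0 mpoly)"
  unfolding e2_3 by (intro sym_mult sym_Const sym_diff sym_pow sym_psum)
lemma sym_e3_3: "symmetric_poly 3 (Var 0 * Var 1 * Var 2 :: 'a::field_char_0 mpoly)"
  unfolding e3_3 by (intro sym_mult sym_Const sym_diff sym_add sym_pow sym_psum sym_numeral)

lemma sym_ph2: "symmetric_poly 2 (ph2 i :: 'a::field_char_0 mpoly)"
  unfolding ph2_def p1_2
  apply (cases "i = 0") apply (simp add: sym_psum)
  apply (cases "i = 1") apply (simp add: sym_e2_2)
  by (simp add: sym_0)

lemma sym_ph3: "symmetric_poly 3 (ph3 i :: 'a::field_char_0 mpoly)"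
  unfolding ph3_def p1_3
  apply (cases "i = 0") apply (simp add: sym_psum)
  apply (cases "i = 1") apply (simp add: sym_e2_3)
  apply (cases "i = 2") apply (simp add: sym_e3_3)
  by (simp add: sym_0)

lemma in_vars_ph2: "in_vars 2 (ph2 i)"
  by (auto simp: ph2_def intro!: in_vars_add in_vars_mult in_vars_Var in_vars_0)
lemma in_vars_ph3: "in_vars 3 (ph3 i)"
  by (auto simp: ph3_def intro!: in_vars_add in_vars_mult in_vars_Var in_vars_0)

lemma bdd_Var: "bdd 1 (Var i)" by (simp add: Var_def bdd_def lookup_single when_def)
lemma bdd_Var2: "i \<noteq> j \<Longrightarrow> bdd 1 (Var i * Var j)"
  by (simp add: Var_def mult_single bdd_def lookup_add lookup_single when_def)
lemma bdd_Var3: "i \<noteq> j \<Longrightarrow> i \<noteq> l \<Longrightarrow> j \<noteq> l \<Longrightarrow> bdd 1 (Var i * Var j * Var l)"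
  by (simp add: Var_def mult_single bdd_def lookup_add lookup_single when_def)

lemma bdd_ph2: "bdd 1 (ph2 i)"
  by (auto simp: ph2_def intro!: bdd_add bdd_Var bdd_Var2 bdd_0)
lemma bdd_ph3: "bdd 1 (ph3 i)"
  by (auto simp: ph3_def intro!: bdd_add bdd_Var bdd_Var2 bdd_Var3 bdd_0)

lemma ones2: "ones 2 = sgl 0 1 + sgl 1 1"
  by (rule poly_mapping_eqI) (simp add: lookup_ones lookup_add lookup_single lookup_one when_def)
lemma ones3: "ones 3 = sgl 0 1 + sgl 1 1 + sgl 2 1"
  by (rule poly_mapping_eqI) (simp add: lookup_ones lookup_add lookup_single lookup_one when_def)
lemma sgl_ones2: "(sgl (ones 2) 1 :: 'a::comm_ring_1 mpoly) = Var 0 * Var 1"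
  by (simp add: ones2 Var_def mult_single)
lemma sgl_ones3: "(sgl (ones 3) 1 :: 'a::comm_ring_1 mpoly) = Var 0 * Var 1 * Var 2"
  by (simp add: ones3 Var_def mult_single)

lemma Var_ne0: "(Var i :: 'a::comm_ring_1 mpoly) \<noteq> 0"
  unfolding Var_def by (metis lookup_single_eq lookup_zero one_neq_zero)


declare One_nat_def[simp del]

lemma keys_rho: "\<mu> \<in> kys (evp (rph j) f) \<Longrightarrow> \<mu> \<in> kys f \<and> lkp \<mu> j = 0"
  by (auto simp: in_keys_iff lookup_rho split: if_splits)

lemma in_vars_rho: "in_vars (Suc j) f \<Longrightarrow> in_vars j (evp (rph j) f)"
  unfolding in_vars_def
proof (intro ballI subsetI)
  fix \<mu> i assume f: "\<forall>m\<in>kys f. kys m \<subseteq> {..<Suc j}" and mu: "\<mu> \<in> kys (evp (rph j) f)" and i: "i \<in> kys \<mu>"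
  from keys_rho[OF mu] have "\<mu> \<in> kys f" "lkp \<mu> j = 0" by auto
  with f i have "i < Suc j" by blast
  moreover have "i \<noteq> j" using i \<open>lkp \<mu> j = 0\<close> by (auto simp: in_keys_iff)
  ultimately show "i \<in> {..<j}" by simp
qed

lemma in_vars_lookup0: "in_vars n p \<Longrightarrow> \<mu> \<in> kys p \<Longrightarrow> n \<le> i \<Longrightarrow> lkp \<mu> i = 0"
  unfolding in_vars_def by (metis in_keys_iff lessThan_iff not_le subsetD)

lemma bdd_rho: "bdd k f \<Longrightarrow> bdd k (evp (rph j) f)"
  unfolding bdd_def using keys_rho by blast

lemma rho_idem: "evp (rph j) (evp (rph j) f) = evp (rph j) f"
  by (rule poly_mapping_eqI) (simp add: lookup_rho)

lemma ft2_step: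
  fixes f :: "'a::field_char_0 mpoly"
  assumes fv: "in_vars 2 f" and fs: "symmetric_poly 2 f" and fb: "bdd k f"
  shows "\<exists>G0 h1. in_vars 2 G0 \<and> tdeg_le k G0 \<and> f = evp ph2 G0 + Var 0 * Var 1 * h1 \<and> in_vars 2 h1
     \<and> symmetric_poly 2 h1 \<and> bdd (k - 1) h1 \<and> (k = 0 \<longrightarrow> h1 = 0)"
proof -
  define G0 where "G0 = evp (rph 1) f"
  have iv1: "in_vars 1 G0" unfolding G0_def using fv by (intro in_vars_rho) (simp add: numeral_2_eq_2)
  then have iv2: "in_vars 2 G0" by (rule in_vars_mono_le) simp
  have td: "tdeg_le k G0"
    unfolding tdeg_le_def
  proof
    fix \<mu> assume mu: "\<mu> \<in> kys G0"
    then have "\<mu> \<in> kys f" "lkp \<mu> 1 = 0" using keys_rho unfolding G0_def by auto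
    moreover have "lkp \<mu> 2 = 0" using in_vars_lookup0[OF iv1 mu] by simp
    moreover have "lkp \<mu> 0 \<le> k" using fb \<open>\<mu> \<in> kys f\<close> by (simp add: bdd_def)
    ultimately show "lkp \<mu> 0 + lkp \<mu> 1 + lkp \<mu> 2 \<le> k" by simp
  qed
  have r: "evp (rph 1) (evp ph2 G0) = G0"
  proof -
    have "evp (rph 1) (evp ph2 G0) = evp (\<lambda>i. evp (rph 1) (ph2 i)) G0" by (rule eval_eval)
    also have "\<dots> = evp Var G0"
      by (rule eval_cong_vars[OF iv1]) (simp add: ph2_def rph_def eval_add)
    finally show ?thesis by (simp add: eval_Var_id)
  qed
  define h where "h = f - evp ph2 G0"
  have "evp (rph 1) h = evp (rph 1) f - G0"
    unfolding h_def hom_diff[OF hom_eval_map] r ..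
  then have rh: "evp (rph 1) h = 0" by (simp add: G0_def)
  have hs: "symmetric_poly 2 h" unfolding h_def by (intro sym_diff fs sym_eval sym_ph2)
  have hv: "in_vars 2 h" unfolding h_def by (intro in_vars_diff fv in_vars_eval[OF iv2] in_vars_ph2)
  have hb: "bdd k h" unfolding h_def
    by (intro bdd_diff fb bdd_eval3 bdd_ph2 td) (rule in_vars_mono_le[OF iv2], simp)
  obtain h1 where h1: "h = sgl (ones 2) 1 * h1" "in_vars 2 h1" "symmetric_poly 2 h1" "bdd (k - 1) h1" "k = 0 \<longrightarrow> h = 0"
    using sym_divide[OF hv hs hb, of 1] rh by auto
  have "k = 0 \<longrightarrow> h1 = 0"
    using h1(1,5) by (auto simp: sgl_ones2 Var_ne0)
  moreover have "f = evp ph2 G0 + Var 0 * Var 1 * h1"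
    using h1(1) unfolding h_def sgl_ones2 by (simp add: algebra_simps)
  ultimately show ?thesis using iv2 td h1 by blast
qed

lemma eval_ph2_Var1: "evp ph2 (Var 1 * G) = Var 0 * Var 1 * evp ph2 G"
  by (simp add: eval_mult ph2_def)
lemma eval_ph3_Var2: "evp ph3 (Var 2 * G) = Var 0 * Var 1 * Var 2 * evp ph3 G"
  by (simp add: eval_mult ph3_def)

lemma ft2_ex:
  fixes f :: "'a::field_char_0 mpoly"
  shows "in_vars 2 f \<Longrightarrow> symmetric_poly 2 f \<Longrightarrow> bdd k f \<Longrightarrow> \<exists>G. in_vars 2 G \<and> tdeg_le k G \<and> evp ph2 G = f"
proof (induction k arbitrary: f)
  case 0
  from ft2_step[OF 0] show ?case by auto
next
  case (Suc k)
  from ft2_step[OF Suc.prems] obtain G0 h1 where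
    s: "in_vars 2 G0" "tdeg_le (Suc k) G0" "f = evp ph2 G0 + Var 0 * Var 1 * h1" "in_vars 2 h1"
       "symmetric_poly 2 h1" "bdd k h1" by auto
  from Suc.IH[OF s(4,5,6)] obtain G1 where G1: "in_vars 2 G1" "tdeg_le k G1" "evp ph2 G1 = h1" by blast
  show ?case
  proof (intro exI conjI)
    show "in_vars 2 (G0 + Var 1 * G1)" by (intro in_vars_add s in_vars_mult in_vars_Var G1) simp
    show "tdeg_le (Suc k) (G0 + Var 1 * G1)" by (intro tdeg_le_add s tdeg_le_Var_mult G1) simp
    show "evp ph2 (G0 + Var 1 * G1) = f" using s(3) G1(3) by (simp add: eval_add eval_ph2_Var1)
  qed
qed

lemma sym2_rho2:
  assumes "symmetric_poly 3 f"
  shows "symmetric_poly 2 (evp (rph 2) f)"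
  unfolding symmetric_poly_def
proof (intro allI impI)
  fix \<sigma> :: "nat \<Rightarrow> nat" and m :: "nat \<Rightarrow>\<^sub>0 nat" assume s: "\<sigma> permutes {..<2}"
  then have s3: "\<sigma> permutes {..<3}" by (rule permutes_subset) auto
  have "\<sigma> 2 = 2" using s by (rule permutes_not_in) simp
  then have "lkp (Poly_Mapping.map_key \<sigma> m) 2 = lkp m 2"
    by (simp add: map_key.rep_eq[OF permutes_inj[OF s]])
  then show "lkp (evp (rph 2) f) (Poly_Mapping.map_key \<sigma> m) = lkp (evp (rph 2) f) m"
    using assms s3 by (simp add: lookup_rho symmetric_poly_def)
qed

lemma ft3_step:
  fixes f :: "'a::field_char_0 mpoly"
  assumes fv: "in_vars 3 f" and fs: "symmetric_poly 3 f" and fb: "bdd k f"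
  shows "\<exists>G0 h1. in_vars 3 G0 \<and> tdeg_le k G0 \<and> f = evp ph3 G0 + Var 0 * Var 1 * Var 2 * h1 \<and> in_vars 3 h1
     \<and> symmetric_poly 3 h1 \<and> bdd (k - 1) h1 \<and> (k = 0 \<longrightarrow> h1 = 0)"
proof -
  have v2: "in_vars 2 (evp (rph 2) f)" using fv by (intro in_vars_rho) (simp add: numeral_3_eq_3)
  obtain H where H: "in_vars 2 H" "tdeg_le k H" "evp ph2 H = evp (rph 2) f"
    using ft2_ex[OF v2 sym2_rho2[OF fs] bdd_rho[OF fb]] by blast
  have iv3: "in_vars 3 H" by (rule in_vars_mono_le[OF H(1)]) simp
  have r: "evp (rph 2) (evp ph3 H) = evp (rph 2) f"
  proof -
    have "evp (rph 2) (evp ph3 H) = evp (\<lambda>i. evp (rph 2) (ph3 i)) H" by (rule eval_eval)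
    also have "\<dots> = evp ph2 H"
      by (rule eval_cong_vars[OF H(1)]) (auto simp: ph2_def ph3_def rph_def eval_add eval_mult less_2_cases_iff)
    finally show ?thesis using H(3) by simp
  qed
  define h where "h = f - evp ph3 H"
  have rh: "evp (rph 2) h = 0"
    unfolding h_def by (simp add: hom_diff[OF hom_eval_map] r)
  have hs: "symmetric_poly 3 h" unfolding h_def by (intro sym_diff fs sym_eval sym_ph3)
  have hv: "in_vars 3 h" unfolding h_def by (intro in_vars_diff fv in_vars_eval[OF iv3] in_vars_ph3)
  have hb: "bdd k h" unfolding h_def
    by (intro bdd_diff fb bdd_eval3 bdd_ph3 H(2) iv3)
  obtain h1 where h1: "h = sgl (ones 3) 1 * h1" "in_vars 3 h1" "symmetric_poly 3 h1" "bdd (k - 1) h1" "k = 0 \<longrightarrow> h = 0"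
    using sym_divide[OF hv hs hb, of 2] rh by auto
  have "k = 0 \<longrightarrow> h1 = 0"
    using h1(1,5) by (auto simp: sgl_ones3 Var_ne0)
  moreover have "f = evp ph3 H + Var 0 * Var 1 * Var 2 * h1"
    using h1(1) unfolding h_def sgl_ones3 by (simp add: algebra_simps)
  ultimately show ?thesis using iv3 H(2) h1 by blast
qed

lemma ft3_ex:
  fixes f :: "'a::field_char_0 mpoly"
  shows "in_vars 3 f \<Longrightarrow> symmetric_poly 3 f \<Longrightarrow> bdd k f \<Longrightarrow> \<exists>G. in_vars 3 G \<and> tdeg_le k G \<and> evp ph3 G = f"
proof (induction k arbitrary: f)
  case 0
  from ft3_step[OF 0] show ?case by auto
next
  case (Suc k)
  from ft3_step[OF Suc.prems] obtain G0 h1 where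
    s: "in_vars 3 G0" "tdeg_le (Suc k) G0" "f = evp ph3 G0 + Var 0 * Var 1 * Var 2 * h1" "in_vars 3 h1"
       "symmetric_poly 3 h1" "bdd k h1" by auto
  from Suc.IH[OF s(4,5,6)] obtain G1 where G1: "in_vars 3 G1" "tdeg_le k G1" "evp ph3 G1 = h1" by blast
  show ?case
  proof (intro exI conjI)
    show "in_vars 3 (G0 + Var 2 * G1)" by (intro in_vars_add s in_vars_mult in_vars_Var G1) simp
    show "tdeg_le (Suc k) (G0 + Var 2 * G1)" by (intro tdeg_le_add s tdeg_le_Var_mult G1) simp
    show "evp ph3 (G0 + Var 2 * G1) = f" using s(3) G1(3) by (simp add: eval_add eval_ph3_Var2)
  qed
qed

lemma bdd_exists: "\<exists>k. bdd k (f :: 'a::comm_ring_1 mpoly)"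
proof -
  let ?k = "\<Sum>m\<in>kys f. \<Sum>i\<in>kys m. lkp m i"
  have "bdd ?k f" unfolding bdd_def
  proof (intro ballI allI)
    fix m i assume m: "m \<in> kys f"
    have "lkp m i \<le> (\<Sum>i\<in>kys m. lkp m i)"
      by (cases "i \<in> kys m") (auto intro: member_le_sum simp: in_keys_iff)
    also have "\<dots> \<le> ?k" using m by (intro member_le_sum) auto
    finally show "lkp m i \<le> ?k" .
  qed
  then show ?thesis by blast
qed


declare One_nat_def[simp del]

lemma shift_var:
  fixes G :: "'a::comm_ring_1 mpoly"
  assumes "\<And>m. m \<in> kys G \<Longrightarrow> lkp m j \<noteq> 0"
  shows "\<exists>G1. G = Var j * G1 \<and> (\<forall>\<nu>. lkp G1 \<nu> = lkp G (\<nu> + sgl j 1))"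
proof -
  have "lkp (sgl j 1) i \<le> lkp m i" if "m \<in> kys G" for m i
    using assms[OF that] by (auto simp: lookup_single when_def)
  from shift[of G "sgl j 1", OF this] show ?thesis by (simp add: Var_def)
qed

lemma keys_sub_add: "i \<in> kys \<nu> \<Longrightarrow> i \<in> kys (\<nu> + (\<mu> :: nat \<Rightarrow>\<^sub>0 nat))"
  by (simp add: in_keys_iff lookup_add)

lemma in_vars_shift:
  assumes "in_vars n G" "\<And>\<nu>. lkp G1 \<nu> = lkp G (\<nu> + \<mu>)"
  shows "in_vars n G1"
  unfolding in_vars_def
proof (intro ballI subsetI)
  fix \<nu> i assume "\<nu> \<in> kys G1" "i \<in> kys \<nu>"
  then have "\<nu> + \<mu> \<in> kys G" "i \<in> kys (\<nu> + \<mu>)" using assms(2) keys_sub_add by (auto simp: in_keys_iff)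
  then show "i \<in> {..<n}" using assms(1) by (auto simp: in_vars_def)
qed

lemma ft_uniq_generic:
  fixes E :: "'a::field_char_0 mpoly \<Rightarrow> 'a mpoly"
  assumes step: "\<And>G. in_vars n G \<Longrightarrow> E G = 0 \<Longrightarrow> evp (rph j) G = 0"
    and mult: "\<And>G1. E (Var j * G1) = c * E G1" and c: "c \<noteq> 0"
  shows "in_vars n G \<Longrightarrow> (\<forall>\<mu>\<in>kys G. lkp \<mu> j \<le> k) \<Longrightarrow> E G = 0 \<Longrightarrow> G = 0"
proof (induction k arbitrary: G)
  case 0
  have "lkp m j \<noteq> 0" if "m \<in> kys G" for m
  proof
    assume "lkp m j = 0"
    then have "lkp (evp (rph j) G) m = lkp G m" by (simp add: lookup_rho)
    then show False using step[OF 0(1,3)] that by (simp add: in_keys_iff)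
  qed
  then have "kys G = {}" using 0(2) by fastforce
  then show ?case by simp
next
  case (Suc k)
  have kj: "lkp m j \<noteq> 0" if "m \<in> kys G" for m
  proof
    assume "lkp m j = 0"
    then have "lkp (evp (rph j) G) m = lkp G m" by (simp add: lookup_rho)
    then show False using step[OF Suc(2,4)] that by (simp add: in_keys_iff)
  qed
  obtain G1 where G1: "G = Var j * G1" "\<And>\<nu>. lkp G1 \<nu> = lkp G (\<nu> + sgl j 1)"
    using shift_var[of G j, OF kj] by blast
  have v: "in_vars n G1" by (rule in_vars_shift[OF Suc(2) G1(2)])
  have b: "\<forall>\<mu>\<in>kys G1. lkp \<mu> j \<le> k"
  proof
    fix \<mu> assume "\<mu> \<in> kys G1"
    then have "\<mu> + sgl j 1 \<in> kys G" using G1(2) by (simp add: in_keys_iff)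
    then show "lkp \<mu> j \<le> k" using Suc(3) by (auto simp: lookup_add)
  qed
  have "E G1 = 0" using Suc(4) c unfolding G1(1) mult by simp
  then have "G1 = 0" by (rule Suc.IH[OF v b])
  then show ?case using G1(1) by simp
qed

lemma bdd_lookup: "bdd k G \<Longrightarrow> \<forall>\<mu>\<in>kys G. lkp \<mu> j \<le> k" by (simp add: bdd_def)

lemma ft2_uniq:
  fixes G :: "'a::field_char_0 mpoly"
  assumes "in_vars 2 G" "evp ph2 G = 0"
  shows "G = 0"
proof -
  have step: "evp (rph 1) G = 0" if "in_vars 2 G" "evp ph2 G = 0" for G :: "'a mpoly"
  proof -
    have "evp (rph 1) (evp ph2 G) = evp (\<lambda>i. evp (rph 1) (ph2 i)) G" by (rule eval_eval)
    also have "\<dots> = evp (rph 1) G"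
      by (rule eval_cong_vars[OF that(1)]) (auto simp: ph2_def rph_def eval_add eval_mult less_2_cases_iff)
    finally show ?thesis using that(2) by simp
  qed
  obtain k where "bdd k G" using bdd_exists by blast
  show ?thesis
    by (rule ft_uniq_generic[of 2 "evp ph2" 1 "Var 0 * Var 1", OF step eval_ph2_Var1 _ assms(1) bdd_lookup[OF \<open>bdd k G\<close>] assms(2)])
       (simp_all add: Var_ne0)
qed

lemma ft3_uniq:
  fixes G :: "'a::field_char_0 mpoly"
  assumes "in_vars 3 G" "evp ph3 G = 0"
  shows "G = 0"
proof -
  have step: "evp (rph 2) G = 0" if "in_vars 3 G" "evp ph3 G = 0" for G :: "'a mpoly"
  proof -
    have "evp ph2 (evp (rph 2) G) = evp (\<lambda>i. evp ph2 (rph 2 i)) G" by (rule eval_eval)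
    also have "\<dots> = evp (\<lambda>i. evp (rph 2) (ph3 i)) G"
      by (rule eval_cong_vars[OF that(1)])
         (auto simp: ph2_def ph3_def rph_def eval_add eval_mult numeral_3_eq_3 less_Suc_eq)
    also have "\<dots> = evp (rph 2) (evp ph3 G)" by (rule eval_eval[symmetric])
    finally have "evp ph2 (evp (rph 2) G) = 0" using that(2) by simp
    moreover have "in_vars 2 (evp (rph 2) G)" using that(1) by (intro in_vars_rho) (simp add: numeral_3_eq_3)
    ultimately show ?thesis using ft2_uniq by blast
  qed
  obtain k where "bdd k G" using bdd_exists by blast
  show ?thesis
    by (rule ft_uniq_generic[of 3 "evp ph3" 2 "Var 0 * Var 1 * Var 2", OF step eval_ph3_Var2 _ assms(1) bdd_lookup[OF \<open>bdd k G\<close>] assms(2)])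
       (simp_all add: Var_ne0)
qed

lemma ft2_inj: "in_vars 2 G \<Longrightarrow> in_vars 2 G' \<Longrightarrow> evp ph2 G = evp ph2 G' \<Longrightarrow> G = (G' :: 'a::field_char_0 mpoly)"
  using ft2_uniq[of "G - G'"] by (simp add: in_vars_diff eval_diff)
lemma ft3_inj: "in_vars 3 G \<Longrightarrow> in_vars 3 G' \<Longrightarrow> evp ph3 G = evp ph3 G' \<Longrightarrow> G = (G' :: 'a::field_char_0 mpoly)"
  using ft3_uniq[of "G - G'"] by (simp add: in_vars_diff eval_diff)


declare One_nat_def[simp del]

definition kap :: "(nat \<Rightarrow>\<^sub>0 nat) \<Rightarrow> nat \<times> nat \<times> nat" where
  "kap \<mu> = (lkp \<mu> 0 + 2 * lkp \<mu> 1 + 3 * lkp \<mu> 2, lkp \<mu> 1, lkp \<mu> 2)"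

definition tadd :: "nat \<times> nat \<times> nat \<Rightarrow> nat \<times> nat \<times> nat \<Rightarrow> nat \<times> nat \<times> nat" where
  "tadd x y = (fst x + fst y, fst (snd x) + fst (snd y), snd (snd x) + snd (snd y))"

lemma kap_add: "kap (\<mu> + \<nu>) = tadd (kap \<mu>) (kap \<nu>)"
  by (simp add: kap_def tadd_def lookup_add)

lemma tadd_less: "x \<le> y \<Longrightarrow> z \<le> w \<Longrightarrow> x < y \<or> z < w \<Longrightarrow> tadd x z < tadd y w"
  by (cases x, cases y, cases z, cases w) (auto simp: tadd_def)

definition lead_ok :: "'a::comm_ring_1 mpoly \<Rightarrow> (nat \<Rightarrow>\<^sub>0 nat) \<Rightarrow> bool" where
  "lead_ok G \<mu> \<longleftrightarrow> lkp G \<mu> \<noteq> 0 \<and> (\<forall>\<nu>\<in>kys G. \<nu> \<noteq> \<mu> \<longrightarrow> kap \<nu> < kap \<mu>)"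

lemma lead_ok_le: "lead_ok G \<mu> \<Longrightarrow> \<nu> \<in> kys G \<Longrightarrow> kap \<nu> \<le> kap \<mu>"
  unfolding lead_ok_def by (cases "\<nu> = \<mu>") auto

lemma lookup_Const_mult: "lkp (Const c * p) m = c * lkp p m"
proof -
  have "Const c * p = (\<Sum>k\<in>kys p. sgl k (c * lkp p k))"
    by (subst (1) pm_sum_singles[symmetric, of p]) (simp add: sum_distrib_left Const_single)
  then show ?thesis
    by (simp add: lookup_sum lookup_single when_def in_keys_iff)
qed

lemma lookup_mult_notin:
  fixes F G :: "'a::comm_ring_1 mpoly"
  assumes "\<And>a b. a \<in> kys F \<Longrightarrow> b \<in> kys G \<Longrightarrow> a + b \<noteq> m"
  shows "lkp (F * G) m = 0"
proof -
  have "m \<notin> kys (F * G)" using keys_mult[of F G] assms by blast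
  then show ?thesis by (simp add: in_keys_iff)
qed

lemma lead_mult:
  fixes F G :: "'a::idom mpoly"
  assumes F: "lead_ok F \<mu>" and G: "lead_ok G \<nu>"
  shows "lead_ok (F * G) (\<mu> + \<nu>) \<and> lkp (F * G) (\<mu> + \<nu>) = lkp F \<mu> * lkp G \<nu>"
proof -
  have kless: "kap (a + b) < kap (\<mu> + \<nu>)" if "a \<in> kys F" "b \<in> kys G" "a \<noteq> \<mu> \<or> b \<noteq> \<nu>" for a b
    unfolding kap_add
    using lead_ok_le[OF F that(1)] lead_ok_le[OF G that(2)] that(3) F G that(1,2)
    by (intro tadd_less) (auto simp: lead_ok_def)
  define F' where "F' = F - sgl \<mu> (lkp F \<mu>)"
  define G' where "G' = G - sgl \<nu> (lkp G \<nu>)"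
  have kF': "a \<in> kys F \<and> a \<noteq> \<mu>" if "a \<in> kys F'" for a
    using that by (auto simp: F'_def in_keys_iff lookup_minus lookup_single when_def split: if_splits)
  have kG': "b \<in> kys G \<and> b \<noteq> \<nu>" if "b \<in> kys G'" for b
    using that by (auto simp: G'_def in_keys_iff lookup_minus lookup_single when_def split: if_splits)
  have dec: "F * G = sgl \<mu> (lkp F \<mu>) * sgl \<nu> (lkp G \<nu>) + sgl \<mu> (lkp F \<mu>) * G' + F' * G"
    by (simp add: F'_def G'_def algebra_simps)
  have z1: "lkp (sgl \<mu> (lkp F \<mu>) * G') (\<mu> + \<nu>) = 0"
  proof (rule lookup_mult_notin)
    fix a b assume "a \<in> kys (sgl \<mu> (lkp F \<mu>))" "b \<in> kys G'"
    then have "a = \<mu>" "b \<in> kys G" "b \<noteq> \<nu>" using kG' by (auto split: if_splits)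
    then have "kap (a + b) < kap (\<mu> + \<nu>)" using kless[of a b] F by (auto simp: lead_ok_def in_keys_iff)
    then show "a + b \<noteq> \<mu> + \<nu>" by auto
  qed
  have z2: "lkp (F' * G) (\<mu> + \<nu>) = 0"
  proof (rule lookup_mult_notin)
    fix a b assume "a \<in> kys F'" "b \<in> kys G"
    then have "kap (a + b) < kap (\<mu> + \<nu>)" using kless[of a b] kF' by auto
    then show "a + b \<noteq> \<mu> + \<nu>" by auto
  qed
  have coef: "lkp (F * G) (\<mu> + \<nu>) = lkp F \<mu> * lkp G \<nu>"
    unfolding dec by (simp add: lookup_add z1 z2 mult_single)
  have "\<forall>m\<in>kys (F * G). m \<noteq> \<mu> + \<nu> \<longrightarrow> kap m < kap (\<mu> + \<nu>)"
  proof (intro ballI impI)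
    fix m assume m: "m \<in> kys (F * G)" "m \<noteq> \<mu> + \<nu>"
    from keys_mult[of F G] m(1) obtain a b where ab: "m = a + b" "a \<in> kys F" "b \<in> kys G" by blast
    then show "kap m < kap (\<mu> + \<nu>)" using kless[of a b] m(2) by auto
  qed
  moreover have "lkp F \<mu> * lkp G \<nu> \<noteq> 0" using F G by (simp add: lead_ok_def)
  ultimately show ?thesis using coef by (simp add: lead_ok_def)
qed

lemma lead_Const_mult: "c \<noteq> 0 \<Longrightarrow> lead_ok F \<mu> \<Longrightarrow> lead_ok (Const c * (F :: 'a::idom mpoly)) \<mu> \<and> lkp (Const c * F) \<mu> = c * lkp F \<mu>"
  unfolding lead_ok_def lookup_Const_mult
  by (auto simp: in_keys_iff lookup_Const_mult)

lemma lead_single: "c \<noteq> 0 \<Longrightarrow> lead_ok (sgl \<mu> c) \<mu>"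
  by (simp add: lead_ok_def)

lemma lead_pow:
  fixes F :: "'a::idom mpoly"
  assumes "lead_ok F (sgl j d)"
  shows "lead_ok (F ^ k) (sgl j (d * k)) \<and> lkp (F ^ k) (sgl j (d * k)) = lkp F (sgl j d) ^ k"
proof (induction k)
  case 0 then show ?case by (simp add: lead_ok_def lookup_one)
next
  case (Suc k)
  have "sgl j d + sgl j (d * k) = sgl j (d * Suc k)" by (simp add: single_add[symmetric])
  then show ?case using lead_mult[OF assms Suc[THEN conjunct1]] Suc[THEN conjunct2] by simp
qed


declare One_nat_def[simp del]

definition repr :: "('i \<Rightarrow> 'a::comm_ring_1 mpoly) \<Rightarrow> ('i \<Rightarrow> 'a) \<Rightarrow> 'a mpoly" where
  "repr B a = (\<Sum>i\<in>{i. a i \<noteq> 0}. Const (a i) * B i)"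

definition adm :: "'i set \<Rightarrow> ('i \<Rightarrow> 'a::zero) \<Rightarrow> bool" where
  "adm I a \<longleftrightarrow> (\<forall>i. i \<notin> I \<longrightarrow> a i = 0) \<and> finite {i. a i \<noteq> 0}"

lemma repr_super: "finite S \<Longrightarrow> {i. a i \<noteq> 0} \<subseteq> S \<Longrightarrow> repr B a = (\<Sum>i\<in>S. Const (a i) * B i)"
  unfolding repr_def by (rule sum.mono_neutral_left) auto

definition spn :: "'i set \<Rightarrow> ('i \<Rightarrow> 'a::comm_ring_1 mpoly) \<Rightarrow> 'a mpoly set" where
  "spn I B = {G. \<exists>a. adm I a \<and> G = repr B a}"

lemma spn_0: "0 \<in> spn I B"
  unfolding spn_def by (rule CollectI, rule exI[of _ "\<lambda>_. 0"]) (simp add: adm_def repr_def)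

lemma spn_add: "p \<in> spn I B \<Longrightarrow> q \<in> spn I B \<Longrightarrow> p + q \<in> spn I B"
proof -
  assume "p \<in> spn I B" "q \<in> spn I B"
  then obtain a a' where a: "adm I a" "p = repr B a" and a': "adm I a'" "q = repr B a'" by (auto simp: spn_def)
  let ?U = "{i. a i \<noteq> 0} \<union> {i. a' i \<noteq> 0}"
  have fU: "finite ?U" using a(1) a'(1) by (simp add: adm_def)
  have "adm I (\<lambda>i. a i + a' i)"
    using a(1) a'(1) unfolding adm_def by (auto intro: finite_subset[OF _ fU])
  moreover have "p + q = repr B (\<lambda>i. a i + a' i)"
  proof -
    have sup: "{i. a i + a' i \<noteq> 0} \<subseteq> ?U" by auto
    show ?thesis using a a'
      by (simp add: repr_super[OF fU, of a] repr_super[OF fU, of a'] repr_super[OF fU sup]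
        Const_add distrib_right sum.distrib)
  qed
  ultimately show ?thesis by (auto simp: spn_def)
qed

lemma spn_smult: "p \<in> spn I B \<Longrightarrow> Const c * p \<in> spn I B"
proof -
  assume "p \<in> spn I B"
  then obtain a where a: "adm I a" "p = repr B a" by (auto simp: spn_def)
  let ?U = "{i. a i \<noteq> 0}"
  have fU: "finite ?U" using a(1) by (simp add: adm_def)
  have "adm I (\<lambda>i. c * a i)"
    using a(1) unfolding adm_def by (auto intro: finite_subset[OF _ fU])
  moreover have "Const c * p = repr B (\<lambda>i. c * a i)"
  proof -
    have sup: "{i. c * a i \<noteq> 0} \<subseteq> ?U" by auto
    show ?thesis using a
      by (simp add: repr_super[OF fU, of a] repr_super[OF fU sup] sum_distrib_left Const_mult mult.assoc)
  qed
  ultimately show ?thesis by (auto simp: spn_def)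
qed

lemma spn_B: "i \<in> I \<Longrightarrow> Const c * B i \<in> spn I B"
proof -
  assume i: "i \<in> I"
  let ?a = "\<lambda>j. if j = i then c else 0"
  have "adm I ?a" using i by (auto simp: adm_def)
  moreover have "repr B ?a = (\<Sum>j\<in>{i}. Const (?a j) * B j)" by (rule repr_super) auto
  then have "Const c * B i = repr B ?a" by simp
  ultimately show ?thesis by (auto simp: spn_def)
qed

lemma spn_diff: "p \<in> spn I B \<Longrightarrow> q \<in> spn I B \<Longrightarrow> p - q \<in> spn I B"
  using spn_add[of p I B "Const (-1) * q"] spn_smult[of q I B "-1"] by (simp add: Const_minus)

lemma spn_sum: "(\<And>i. i \<in> S \<Longrightarrow> f i \<in> spn I B) \<Longrightarrow> (\<Sum>i\<in>S. f i) \<in> spn I B"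
  by (induction S rule: infinite_finite_induct) (auto simp: spn_0 spn_add)

lemma tri_exists:
  fixes B :: "'i \<Rightarrow> 'a::field mpoly"
  assumes Lsurj: "\<And>\<mu>. \<mu> \<in> Piv \<Longrightarrow> \<exists>i\<in>I. L i = \<mu>"
    and BP: "\<And>i. i \<in> I \<Longrightarrow> kys (B i) \<subseteq> Piv"
    and lead: "\<And>i. i \<in> I \<Longrightarrow> lead_ok (B i) (L i)"
    and G: "kys G \<subseteq> Piv"
  shows "G \<in> spn I B"
proof -
  have claim: "\<forall>\<mu>. kap \<mu> = t \<longrightarrow> \<mu> \<in> Piv \<longrightarrow> (\<forall>c. sgl \<mu> c \<in> spn I B)" for t
  proof (induction t rule: less_induct)
    case (less t)
    show ?case
    proof (intro allI impI)
      fix \<mu> c assume kt: "kap \<mu> = t" and mP: "\<mu> \<in> Piv"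
      obtain i where i: "i \<in> I" "L i = \<mu>" using Lsurj[OF mP] by blast
      define b where "b = lkp (B i) \<mu>"
      have b: "b \<noteq> 0" using lead[OF i(1)] i(2) by (simp add: lead_ok_def b_def)
      define R where "R = B i - sgl \<mu> b"
      have kR: "\<nu> \<in> kys (B i) \<and> \<nu> \<noteq> \<mu>" if "\<nu> \<in> kys R" for \<nu>
        using that by (auto simp: R_def b_def in_keys_iff lookup_minus lookup_single when_def split: if_splits)
      have Rs: "R \<in> spn I B"
      proof -
        have "(\<Sum>\<nu>\<in>kys R. sgl \<nu> (lkp R \<nu>)) \<in> spn I B"
        proof (rule spn_sum)
          fix \<nu> assume nu: "\<nu> \<in> kys R"
          then have "kap \<nu> < kap \<mu>" using kR[OF nu] lead[OF i(1)] i(2) by (auto simp: lead_ok_def)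
          moreover have "\<nu> \<in> Piv" using kR[OF nu] BP[OF i(1)] by blast
          ultimately show "sgl \<nu> (lkp R \<nu>) \<in> spn I B" using less.IH kt by blast
        qed
        then show ?thesis by (simp add: pm_sum_singles)
      qed
      have "sgl \<mu> c = Const (c / b) * (B i - R)"
        using b by (simp add: R_def Const_single)
      also have "\<dots> \<in> spn I B"
        by (intro spn_smult spn_diff Rs) (use spn_B[OF i(1), of 1] in simp)
      finally show "sgl \<mu> c \<in> spn I B" .
    qed
  qed
  have "(\<Sum>\<mu>\<in>kys G. sgl \<mu> (lkp G \<mu>)) \<in> spn I B"
    by (rule spn_sum) (use claim G in blast)
  then show ?thesis by (simp add: pm_sum_singles)
qed

lemma tri_uniq:
  fixes B :: "'i \<Rightarrow> 'a::field mpoly"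
  assumes Linj: "inj_on L I" and LP: "\<And>i. i \<in> I \<Longrightarrow> L i \<in> Piv" and kinj: "inj_on kap Piv"
    and lead: "\<And>i. i \<in> I \<Longrightarrow> lead_ok (B i) (L i)"
    and a: "adm I a" and a': "adm I a'" and eq: "repr B a = repr B a'"
  shows "a = a'"
proof (rule ccontr)
  assume ne: "a \<noteq> a'"
  define d where "d i = a i - a' i" for i
  let ?U = "{i. a i \<noteq> 0} \<union> {i. a' i \<noteq> 0}"
  have fU: "finite ?U" using a a' by (simp add: adm_def)
  have z: "(\<Sum>i\<in>?U. Const (d i) * B i) = 0"
    using eq by (simp add: repr_super[OF fU, of a] repr_super[OF fU, of a'] d_def Const_diff
        left_diff_distrib sum_subtractf)
  define S where "S = {i. d i \<noteq> 0}"
  have SU: "S \<subseteq> ?U" by (auto simp: S_def d_def)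
  have SI: "S \<subseteq> I"
  proof
    fix x assume "x \<in> S"
    then have "a x \<noteq> a' x" by (simp add: S_def d_def)
    then show "x \<in> I" using a a' unfolding adm_def by metis
  qed
  have Sne: "S \<noteq> {}" using ne by (auto simp: S_def d_def fun_eq_iff)
  have fS: "finite S" using SU fU finite_subset by blast
  define M where "M = Max ((\<lambda>i. kap (L i)) ` S)"
  have "M \<in> (\<lambda>i. kap (L i)) ` S" unfolding M_def using fS Sne by (intro Max_in) auto
  then obtain i0 where i0: "i0 \<in> S" "kap (L i0) = M" by blast
  have maxi: "kap (L i) \<le> kap (L i0)" if "i \<in> S" for i
    unfolding i0(2) M_def using fS that by (intro Max_ge) auto
  have other: "lkp (B i) (L i0) = 0" if "i \<in> S" "i \<noteq> i0" for i
  proof (rule ccontr)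
    assume "lkp (B i) (L i0) \<noteq> 0"
    then have "kap (L i0) \<le> kap (L i)" using lead_ok_le[OF lead] that SI by (auto simp: in_keys_iff)
    with maxi[OF that(1)] have "kap (L i0) = kap (L i)" by simp
    then have "L i0 = L i" using kinj LP SI that i0(1) by (auto dest: inj_onD)
    then have "i0 = i" using Linj SI that i0(1) by (auto dest: inj_onD)
    then show False using that by simp
  qed
  have "lkp (\<Sum>i\<in>?U. Const (d i) * B i) (L i0) = (\<Sum>i\<in>?U. d i * lkp (B i) (L i0))"
    by (simp add: lookup_sum lookup_Const_mult)
  also have "\<dots> = d i0 * lkp (B i0) (L i0) + (\<Sum>i\<in>?U - {i0}. d i * lkp (B i) (L i0))"
    using i0(1) SU fU by (intro sum.remove) auto
  also have "(\<Sum>i\<in>?U - {i0}. d i * lkp (B i) (L i0)) = 0"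
  proof (rule sum.neutral, rule ballI)
    fix i assume i: "i \<in> ?U - {i0}"
    show "d i * lkp (B i) (L i0) = 0"
    proof (cases "d i = 0")
      case False
      then have "i \<in> S" by (simp add: S_def)
      then show ?thesis using other i by simp
    qed simp
  qed
  finally have "d i0 * lkp (B i0) (L i0) = 0" using z by simp
  moreover have "d i0 \<noteq> 0" using i0(1) by (simp add: S_def)
  moreover have "lkp (B i0) (L i0) \<noteq> 0" using lead i0(1) SI by (auto simp: lead_ok_def)
  ultimately show False by simp
qed

lemma basis_transfer:
  fixes E :: "'a::field mpoly \<Rightarrow> 'a mpoly" and B b :: "'i \<Rightarrow> 'a mpoly"
  assumes hE: "hom E"
    and BI: "\<And>i. i \<in> I \<Longrightarrow> E (B i) = b i \<and> in_vars N (B i)"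
    and Srep: "\<And>p. p \<in> S \<Longrightarrow> \<exists>G. in_vars N G \<and> kys G \<subseteq> Piv \<and> E G = p"
    and inj: "\<And>G G'. in_vars N G \<Longrightarrow> in_vars N G' \<Longrightarrow> E G = E G' \<Longrightarrow> G = G'"
    and bS: "b ` I \<subseteq> S"
    and Lsurj: "\<And>\<mu>. \<mu> \<in> Piv \<Longrightarrow> \<exists>i\<in>I. L i = \<mu>"
    and BP: "\<And>i. i \<in> I \<Longrightarrow> kys (B i) \<subseteq> Piv"
    and lead: "\<And>i. i \<in> I \<Longrightarrow> lead_ok (B i) (L i)"
    and Linj: "inj_on L I" and LP: "\<And>i. i \<in> I \<Longrightarrow> L i \<in> Piv" and kinj: "inj_on kap Piv"
  shows "is_basis I b S"
proof -
  have Er: "E (repr B a) = repr b a" if "adm I a" for a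
  proof -
    have "i \<in> I" if "a i \<noteq> 0" for i using \<open>adm I a\<close> that by (auto simp: adm_def)
    then show ?thesis
      unfolding repr_def by (simp add: hom_sum[OF hE] hom_mult[OF hE] hom_Const[OF hE] BI)
  qed
  have vr: "in_vars N (repr B a)" if "adm I a" for a
  proof -
    have "i \<in> I" if "a i \<noteq> 0" for i using \<open>adm I a\<close> that by (auto simp: adm_def)
    then show ?thesis
      unfolding repr_def by (auto intro!: in_vars_sum in_vars_mult in_vars_Const simp: BI)
  qed
  show ?thesis
    unfolding is_basis_def
  proof (intro conjI bS ballI)
    fix p assume p: "p \<in> S"
    obtain G where G: "in_vars N G" "kys G \<subseteq> Piv" "E G = p" using Srep[OF p] by blast
    obtain a where a: "adm I a" "G = repr B a"
      using tri_exists[OF Lsurj BP lead G(2)] by (auto simp: spn_def)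
    have ex: "adm I a \<and> p = repr b a" using a G(3) Er by simp
    have un: "a' = a" if "adm I a' \<and> p = repr b a'" for a'
    proof -
      have "E (repr B a') = E (repr B a)" using that ex Er by simp
      then have "repr B a' = repr B a" using inj vr that ex by blast
      then show ?thesis using tri_uniq[OF Linj LP kinj lead] that ex by blast
    qed
    show "\<exists>!a. (\<forall>i. i \<notin> I \<longrightarrow> a i = 0) \<and> finite {i. a i \<noteq> 0} \<and> p = (\<Sum>i\<in>{i. a i \<noteq> 0}. Const (a i) * b i)"
      using ex un unfolding adm_def repr_def by blast
  qed
qed


declare One_nat_def[simp del]

lemma lookup_sgl_mult: "lkp (sgl \<mu> 1 * X) (\<mu> + \<nu>) = lkp (X :: 'a::comm_ring_1 mpoly) \<nu>"
proof -
  have "sgl \<mu> 1 * X = (\<Sum>m\<in>kys X. sgl (\<mu> + m) (lkp X m))"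
    by (subst (1) pm_sum_singles[symmetric, of X]) (simp add: sum_distrib_left mult_single)
  then show ?thesis by (simp add: lookup_sum lookup_single when_def in_keys_iff)
qed

lemma lookup_Var_mult: "lkp (Var j * X) (sgl j 1 + \<nu>) = lkp (X :: 'a::comm_ring_1 mpoly) \<nu>"
  unfolding Var_def by (rule lookup_sgl_mult)

lemma lookup_Var_mult0: "lkp \<nu> j = 0 \<Longrightarrow> lkp (Var j * X) \<nu> = (0 :: 'a::comm_ring_1)"
  by (rule lookup_mult_notin) (auto simp: Var_def lookup_add split: if_splits)

definition homog :: "nat \<Rightarrow> 'a::comm_ring_1 mpoly \<Rightarrow> bool" where
  "homog d G \<longleftrightarrow> (\<forall>\<mu>\<in>kys G. fst (kap \<mu>) = d)"

lemma homog_add: "homog d p \<Longrightarrow> homog d q \<Longrightarrow> homog d (p + q)"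
proof (unfold homog_def, intro ballI)
  fix m assume "\<forall>m\<in>kys p. fst (kap m) = d" "\<forall>m\<in>kys q. fst (kap m) = d" "m \<in> kys (p + q)"
  moreover have "m \<in> kys p \<union> kys q" using keys_add[of p q] \<open>m \<in> kys (p + q)\<close> by (rule subsetD)
  ultimately show "fst (kap m) = d" by auto
qed
lemma homog_uminus: "homog d p \<Longrightarrow> homog d (- p)" by (simp add: homog_def)
lemma homog_diff: "homog d p \<Longrightarrow> homog d q \<Longrightarrow> homog d (p - q)"
  unfolding diff_conv_add_uminus by (intro homog_add homog_uminus)
lemma homog_mult: "homog d p \<Longrightarrow> homog e q \<Longrightarrow> homog (d + e) (p * q)"
proof (unfold homog_def, intro ballI)
  fix m assume p: "\<forall>m\<in>kys p. fst (kap m) = d" and q: "\<forall>m\<in>kys q. fst (kap m) = e" and m: "m \<in> kys (p * q)"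
  from keys_mult[of p q] m obtain a b where ab: "m = a + b" "a \<in> kys p" "b \<in> kys q" by blast
  then show "fst (kap m) = d + e" using p q by (simp add: kap_add tadd_def)
qed
lemma homog_Const: "homog 0 (Const c)" by (simp add: homog_def Const_def kap_def)
lemma homog_Var0: "homog 1 (Var 0)" by (simp add: homog_def Var_def kap_def lookup_single lookup_one)
lemma homog_Var1: "homog 2 (Var 1)" by (simp add: homog_def Var_def kap_def lookup_single)
lemma homog_Var2: "homog 3 (Var 2)" by (simp add: homog_def Var_def kap_def lookup_single)
lemma homog_pow: "homog d p \<Longrightarrow> homog (d * k) (p ^ k)"
proof (induction k)
  case 0 then show ?case using homog_Const[of 1] by simp
next
  case (Suc k) then show ?case using homog_mult[of d p "d*k" "p^k"] by (simp add: add.commute)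
qed

lemma kap_inj: "inj_on kap {\<mu>. kys \<mu> \<subseteq> {..<3}}"
proof (rule inj_onI)
  fix \<mu> \<nu> assume m: "\<mu> \<in> {\<mu>. kys \<mu> \<subseteq> {..<3}}" and n: "\<nu> \<in> {\<mu>. kys \<mu> \<subseteq> {..<3}}" and k: "kap \<mu> = kap \<nu>"
  show "\<mu> = \<nu>"
  proof (rule poly_mapping_eqI)
    fix i
    show "lkp \<mu> i = lkp \<nu> i"
    proof (cases "i < 3")
      case True
      then have "i = 0 \<or> i = 1 \<or> i = 2" by auto
      then show ?thesis using k by (auto simp: kap_def)
    next
      case False
      then have "i \<notin> kys \<mu>" "i \<notin> kys \<nu>" using m n by auto
      then show ?thesis by (simp add: in_keys_iff)
    qed
  qed
qed

lemma key_eval_inj: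
  fixes G :: "'a::idom mpoly"
  assumes mmono: "\<And>\<mu>'. \<mu>' \<in> kys G \<Longrightarrow> mmono \<psi> \<mu>' = (if P \<mu>' then sgl (g \<mu>') (s \<mu>') else 0)"
    and inj: "inj_on g {\<mu>'\<in>kys G. P \<mu>'}" and s: "\<And>\<mu>'. s \<mu>' \<noteq> 0"
    and mu: "\<mu> \<in> kys G" "P \<mu>"
  shows "g \<mu> \<in> kys (evp \<psi> G)"
proof -
  have "lkp (evp \<psi> G) (g \<mu>) = (\<Sum>\<mu>'\<in>kys G. lkp G \<mu>' * (if P \<mu>' \<and> g \<mu>' = g \<mu> then s \<mu>' else 0))"
    unfolding evp_def lookup_sum
    by (rule sum.cong) (auto simp: mmono lookup_Const_mult lookup_single when_def)
  also have "\<dots> = lkp G \<mu> * s \<mu> + (\<Sum>\<mu>'\<in>kys G - {\<mu>}. lkp G \<mu>' * (if P \<mu>' \<and> g \<mu>' = g \<mu> then s \<mu>' else 0))"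
    using mu by (subst sum.remove[of _ \<mu>]) auto
  also have "(\<Sum>\<mu>'\<in>kys G - {\<mu>}. lkp G \<mu>' * (if P \<mu>' \<and> g \<mu>' = g \<mu> then s \<mu>' else 0)) = 0"
    using inj mu by (intro sum.neutral) (auto dest: inj_onD)
  finally have "lkp (evp \<psi> G) (g \<mu>) = lkp G \<mu> * s \<mu>" by simp
  then show ?thesis using mu s by (simp add: in_keys_iff)
qed

lemma neg_pow_sgl: "(- (Var 0 ^ 2) :: 'a::comm_ring_1 mpoly) ^ k = sgl (sgl 0 (2 * k)) ((-1) ^ k)"
proof -
  have a: "(-1 :: 'a mpoly) ^ k = Const ((-1) ^ k)" by (simp only: Const_pow Const_minus Const_1)
  have "(- (Var 0 ^ 2) :: 'a mpoly) ^ k = Const ((-1) ^ k) * Var 0 ^ (2 * k)"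
    by (subst power_minus) (simp only: a power_mult)
  then show ?thesis by (simp add: Var_pow Const_single)
qed


declare single_one[simp del]

fun P2 :: "nat \<Rightarrow> 'a::comm_ring_1 mpoly" where
  "P2 0 = Const 2"
| "P2 (Suc 0) = Var 0"
| "P2 (Suc (Suc k)) = Var 0 * P2 (Suc k) - Var 1 * P2 k"

lemma P2_1[simp]: "P2 1 = Var 0" using P2.simps(2) by (simp only: One_nat_def)

lemma eval_P2: "evp ph2 (P2 k) = (psum 2 k :: 'a::comm_ring_1 mpoly)"
proof (induction k rule: P2.induct)
  case 1 then show ?case by (simp add: psum2 Const_numeral)
next
  case 2 then show ?case by (simp add: psum2 ph2_def)
next
  case (3 k)
  then show ?case by (simp add: eval_diff eval_mult ph2_def psum2 algebra_simps)
qed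

lemma in_vars_P2: "in_vars 2 (P2 k)"
  by (induction k rule: P2.induct) (auto intro!: in_vars_Const in_vars_Var in_vars_diff in_vars_mult)

lemma homog_P2: "homog k (P2 k)"
proof (induction k rule: P2.induct)
  case 1 then show ?case using homog_Const by simp
next
  case 2 then show ?case using homog_Var0 by (simp add: One_nat_def)
next
  case (3 k)
  have a: "homog (Suc (Suc k)) (Var 0 * P2 (Suc k) :: 'a mpoly)" using homog_mult[OF homog_Var0, of "Suc k" "P2 (Suc k)"] 3 by (simp add: One_nat_def)
  have b: "homog (Suc (Suc k)) (Var 1 * P2 k :: 'a mpoly)" using homog_mult[OF homog_Var1, of k "P2 k"] 3 by simp
  show ?case using homog_diff[OF a b] by simp
qed

lemma P2_coef:
  "lkp (P2 (2*m)) (sgl 1 m) = (2 * (-1)^m :: 'a::comm_ring_1) \<and>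
   lkp (P2 (2*m+1)) (sgl 0 1 + sgl 1 m) = ((-1)^m * of_nat (2*m+1) :: 'a)"
proof (induction m)
  case 0
  show ?case by (simp add: lookup_Const Var_def lookup_one)
next
  case (Suc m)
  have e1: "2 * Suc m = Suc (Suc (2*m))" by simp
  have e2: "2 * Suc m + 1 = Suc (Suc (2*m+1))" by simp
  have s1: "sgl 1 (Suc m) = sgl 1 1 + sgl 1 m" by (metis plus_1_eq_Suc single_add)
  have s2: "sgl 0 1 + sgl 1 (Suc m) = sgl 1 1 + (sgl 0 1 + sgl 1 m)" by (simp only: s1 add_ac)
  have A: "lkp (P2 (2 * Suc m)) (sgl 1 (Suc m)) = (2 * (-1)^Suc m :: 'a)"
  proof -
    have "lkp (P2 (2 * Suc m)) (sgl 1 (Suc m)) = (lkp (Var 0 * P2 (2*m+1)) (sgl 1 (Suc m)) - lkp (Var 1 * P2 (2*m)) (sgl 1 1 + sgl 1 m) :: 'a)"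
      by (simp only: e1 P2.simps lookup_minus s1) (simp add: One_nat_def)
    also have "\<dots> = - (2 * (-1)^m)"
      by (simp add: lookup_Var_mult0 lookup_single lookup_Var_mult Suc[THEN conjunct1])
    finally show ?thesis by simp
  qed
  have B: "lkp (P2 (2 * Suc m + 1)) (sgl 0 1 + sgl 1 (Suc m)) = ((-1)^Suc m * of_nat (2 * Suc m + 1) :: 'a)"
  proof -
    have "lkp (P2 (2 * Suc m + 1)) (sgl 0 1 + sgl 1 (Suc m)) = (
          lkp (Var 0 * P2 (2 * Suc m)) (sgl 0 1 + sgl 1 (Suc m)) - lkp (Var 1 * P2 (2*m+1)) (sgl 1 1 + (sgl 0 1 + sgl 1 m)) :: 'a)"
      by (simp only: e2 P2.simps lookup_minus s2) (simp add: e1)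
    also have "\<dots> = 2 * (-1)^Suc m - (-1)^m * of_nat (2*m+1)"
      by (simp only: lookup_Var_mult A Suc[THEN conjunct2])
    also have "\<dots> = (-1)^Suc m * of_nat (2 * Suc m + 1)" by (simp add: algebra_simps)
    finally show ?thesis .
  qed
  show ?case using A B by blast
qed

lemma lkp_t2: "lkp (sgl 0 1 + sgl 1 m :: nat \<Rightarrow>\<^sub>0 nat) i = (if i = 0 then 1 else if i = 1 then m else 0)"
  by (simp add: lookup_add lookup_single lookup_one when_def)

lemma odd_coef_ne0: "((-1)^m * of_nat (2*m+1) :: 'a::field_char_0) \<noteq> 0"
proof -
  have x: "(of_nat (2*m+1) :: 'a) \<noteq> 0" by (subst of_nat_eq_0_iff) simp
  have "\<forall>x::'a. x \<noteq> 0 \<longrightarrow> (-1)^m * x \<noteq> 0" by simp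
  then show ?thesis using x by blast
qed

lemma P2_key:
  assumes "\<nu> \<in> kys (P2 k)"
  shows "lkp \<nu> 0 + 2 * lkp \<nu> 1 = k" "\<And>i. 2 \<le> i \<Longrightarrow> lkp \<nu> i = 0"
proof -
  show z: "\<And>i. 2 \<le> i \<Longrightarrow> lkp \<nu> i = 0" using in_vars_lookup0[OF in_vars_P2 assms] .
  have "fst (kap \<nu>) = k" using homog_P2[of k] assms unfolding homog_def by blast
  with z[of 2] show "lkp \<nu> 0 + 2 * lkp \<nu> 1 = k" by (simp add: kap_def)
qed

lemma lead_P2: "lead_ok (P2 (2*m+1) :: 'a::field_char_0 mpoly) (sgl 0 1 + sgl 1 m)"
proof -
  let ?t = "sgl 0 1 + sgl 1 m :: nat \<Rightarrow>\<^sub>0 nat"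
  have e: "lkp (P2 (2*m+1) :: 'a mpoly) ?t = (-1)^m * of_nat (2*m+1)"
    using P2_coef[of m, where 'a='a] by blast
  have c: "lkp (P2 (2*m+1) :: 'a mpoly) ?t \<noteq> 0"
    unfolding e by (rule odd_coef_ne0)
  have "kap \<nu> < kap ?t" if nu: "\<nu> \<in> kys (P2 (2*m+1) :: 'a mpoly)" "\<nu> \<noteq> ?t" for \<nu>
  proof -
    note k = P2_key[OF nu(1)]
    have "lkp \<nu> 1 \<noteq> m"
    proof
      assume a: "lkp \<nu> 1 = m"
      then have "lkp \<nu> 0 = 1" using k(1) by simp
      then have "\<nu> = ?t"
        by (intro poly_mapping_eqI) (use a k(2) in \<open>auto simp: lkp_t2\<close>)
      then show False using nu(2) by simp
    qed
    then have "lkp \<nu> 1 < m" using k(1) by simp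
    then show ?thesis using k by (simp add: kap_def lkp_t2)
  qed
  then show ?thesis using c by (simp add: lead_ok_def)
qed

lemma P2_odd_key: assumes "\<nu> \<in> kys (P2 (2*m+1))" shows "lkp \<nu> 0 \<noteq> 0"
  using P2_key(1)[OF assms] by presburger

definition B2 :: "nat \<times> nat option \<Rightarrow> 'a::comm_ring_1 mpoly" where
  "B2 = (\<lambda>(c, e). Var 0 ^ c * (case e of None \<Rightarrow> 1 | Some m \<Rightarrow> P2 (2*m+1)))"

definition L2 :: "nat \<times> nat option \<Rightarrow> (nat \<Rightarrow>\<^sub>0 nat)" where
  "L2 = (\<lambda>(c, e). case e of None \<Rightarrow> sgl 0 c | Some m \<Rightarrow> sgl 0 c + (sgl 0 1 + sgl 1 m))"

definition Piv2 :: "(nat \<Rightarrow>\<^sub>0 nat) set" where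
  "Piv2 = {\<mu>. kys \<mu> \<subseteq> {..<2} \<and> (lkp \<mu> 0 = 0 \<longrightarrow> lkp \<mu> 1 = 0)}"

lemma lead_B2: "lead_ok (B2 i :: 'a::field_char_0 mpoly) (L2 i)"
proof (cases i)
  case (Pair c e)
  have v: "lead_ok (Var 0 ^ c :: 'a mpoly) (sgl 0 c)" by (simp add: Var_pow lead_single)
  show ?thesis
  proof (cases e)
    case None then show ?thesis using v Pair by (simp add: B2_def L2_def)
  next
    case (Some m) then show ?thesis using lead_mult[OF v lead_P2[of m]] Pair by (simp add: B2_def L2_def)
  qed
qed

lemma in_vars_B2: "in_vars 2 (B2 i)"
  by (cases i) (auto simp: B2_def split: option.splits intro!: in_vars_mult in_vars_pow in_vars_Var in_vars_P2 in_vars_1)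

lemma keys_B2: "kys (B2 i :: 'a::comm_ring_1 mpoly) \<subseteq> Piv2"
proof
  fix \<nu> assume nu: "\<nu> \<in> kys (B2 i :: 'a mpoly)"
  have kv: "kys \<nu> \<subseteq> {..<2}" using in_vars_B2[of i, where 'a='a] nu by (auto simp: in_vars_def)
  obtain c e where i: "i = (c, e)" by (cases i)
  have "lkp \<nu> 1 = 0" if "lkp \<nu> 0 = 0"
  proof (cases e)
    case None
    then have "\<nu> = sgl 0 c" using nu i by (simp add: B2_def Var_pow split: if_splits)
    then show ?thesis by (simp add: lookup_single)
  next
    case (Some m)
    then have "\<nu> \<in> kys (Var 0 ^ c * P2 (2*m+1) :: 'a mpoly)" using nu i by (simp add: B2_def)
    then obtain a b where ab: "\<nu> = a + b" "a \<in> kys (Var 0 ^ c :: 'a mpoly)" "b \<in> kys (P2 (2*m+1) :: 'a mpoly)"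
      using keys_mult by blast
    then have "lkp b 0 \<noteq> 0" by (intro P2_odd_key)
    then show ?thesis using that ab by (simp add: lookup_add)
  qed
  then show "\<nu> \<in> Piv2" using kv by (simp add: Piv2_def)
qed

lemma L2_alt: "L2 (c, None) = sgl 0 c" "L2 (c, Some m) = sgl 0 (Suc c) + sgl 1 m"
  by (simp add: L2_def) (rule poly_mapping_eqI, simp add: L2_def lookup_add lookup_single when_def)

lemma keys01: "kys (sgl 0 a + sgl 1 b :: nat \<Rightarrow>\<^sub>0 nat) \<subseteq> {..<2}"
  by (auto simp: in_keys_iff lookup_add lookup_single when_def split: if_splits)

lemma L2_Piv: "L2 i \<in> Piv2"
proof (cases i)
  case (Pair c e)
  show ?thesis
  proof (cases e)
    case None
    have "kys (sgl 0 c :: nat \<Rightarrow>\<^sub>0 nat) \<subseteq> {..<2}" by simp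
    then show ?thesis using Pair None by (simp add: L2_alt Piv2_def lookup_single)
  next
    case (Some m)
    then show ?thesis using Pair keys01[of "Suc c" m] by (simp add: L2_alt Piv2_def lookup_add lookup_single)
  qed
qed

lemma L2_inj: "inj_on L2 proper_idx2"
proof (rule inj_onI)
  fix i j assume i: "i \<in> proper_idx2" and j: "j \<in> proper_idx2" and e: "L2 i = L2 j"
  obtain c e1 where ic: "i = (c, e1)" by (cases i)
  obtain d e2 where jd: "j = (d, e2)" by (cases j)
  have l0: "lkp (L2 i) 0 = lkp (L2 j) 0" and l1: "lkp (L2 i) 1 = lkp (L2 j) 1" using e by simp_all
  show "i = j"
    using i j l0 l1 ic jd
    by (auto simp: L2_def proper_idx2_def lookup_add lookup_single when_def split: option.splits)
qed

lemma L2_surj: "\<mu> \<in> Piv2 \<Longrightarrow> \<exists>i\<in>proper_idx2. L2 i = \<mu>"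
proof -
  assume m: "\<mu> \<in> Piv2"
  then have kv: "kys \<mu> \<subseteq> {..<2}" and z: "lkp \<mu> 0 = 0 \<longrightarrow> lkp \<mu> 1 = 0" by (auto simp: Piv2_def)
  have hi: "lkp \<mu> i = 0" if "2 \<le> i" for i using kv that by (auto simp: in_keys_iff)
  show ?thesis
  proof (cases "lkp \<mu> 1 = 0")
    case True
    have "L2 (lkp \<mu> 0, None) = \<mu>"
    proof (rule poly_mapping_eqI)
      fix k show "lkp (L2 (lkp \<mu> 0, None)) k = lkp \<mu> k"
        using True hi[of k] by (cases "k = 0"; cases "k = 1") (auto simp: L2_def lookup_single)
    qed
    then show ?thesis by (intro bexI[of _ "(lkp \<mu> 0, None)"]) (auto simp: proper_idx2_def)
  next
    case False
    then have "lkp \<mu> 0 \<noteq> 0" using z by auto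
    then have "L2 (lkp \<mu> 0 - 1, Some (lkp \<mu> 1)) = \<mu>"
      by (intro poly_mapping_eqI) (use hi in \<open>auto simp: L2_def lookup_add lookup_single when_def\<close>)
    then show ?thesis using False by (intro bexI[of _ "(lkp \<mu> 0 - 1, Some (lkp \<mu> 1))"]) (auto simp: proper_idx2_def)
  qed
qed

lemma eval_B2: "evp ph2 (B2 i) = (proper2 i :: 'a::comm_ring_1 mpoly)"
  by (cases i) (auto simp: B2_def proper2_def eval_mult eval_pow eval_P2 ph2_def p1_2 split: option.splits)

lemma proper2_subalg: "proper2 i \<in> subalg (range (\<lambda>k. psum 2 (2*k+1)))"
proof -
  have g1: "psum 2 1 \<in> subalg (range (\<lambda>k. psum 2 (2*k+1)))"
    by (rule subalg.gen) (rule range_eqI[of _ _ 0], simp)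
  have g: "psum 2 (2*m+1) \<in> subalg (range (\<lambda>k. psum 2 (2*k+1)))" for m
    by (rule subalg.gen) simp
  show ?thesis
    by (cases i) (auto simp: proper2_def split: option.splits intro!: subalg.mult subalg_pow g1 g
          subalg.const[of 1, simplified])
qed

definition tau2 :: "nat \<Rightarrow> 'a::comm_ring_1 mpoly" where
  "tau2 i = (if i = 1 then - (Var 0 ^ 2) else 0)"

lemma subst_ph2_0: "subst_t (ph2 0) = (tau2 0 :: 'a::comm_ring_1 mpoly)"
  by (simp add: ph2_def tau2_def hom_add[OF hom_subst_t] subst_t_Var0 subst_t_Var1)
lemma subst_ph2_1: "subst_t (ph2 1) = (tau2 1 :: 'a::comm_ring_1 mpoly)"
  by (simp add: ph2_def tau2_def hom_mult[OF hom_subst_t] subst_t_Var0 subst_t_Var1 power2_eq_square)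

lemma subst_eval_ph2: "in_vars 2 G \<Longrightarrow> subst_t (evp ph2 G) = evp tau2 (G :: 'a::comm_ring_1 mpoly)"
  unfolding hom_eval_comp[OF hom_subst_t]
proof (rule eval_cong_vars)
  fix i :: nat assume "i < 2"
  then have "i = 0 \<or> i = 1" by auto
  then show "subst_t (ph2 i) = (tau2 i :: 'a mpoly)" using subst_ph2_0 subst_ph2_1 by auto
qed

lemma T2_rep:
  assumes p: "p \<in> T 2"
  shows "\<exists>G. in_vars 2 G \<and> kys G \<subseteq> Piv2 \<and> evp ph2 G = (p :: 'a::field_char_0 mpoly)"
proof -
  have pv: "in_vars 2 p" and ps: "symmetric_poly 2 p" and pi: "indep_t (subst_t p)"
    using p by (auto simp: T_def mono_supersym_def)
  obtain k where "bdd k p" using bdd_exists by blast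
  then obtain G where G: "in_vars 2 G" "evp ph2 G = p" using ft2_ex[OF pv ps] by blast
  have "kys G \<subseteq> Piv2"
  proof
    fix \<mu> assume mu: "\<mu> \<in> kys G"
    have kv: "kys \<mu> \<subseteq> {..<2}" using G(1) mu by (auto simp: in_vars_def)
    have "lkp \<mu> 1 = 0" if z: "lkp \<mu> 0 = 0"
    proof (rule ccontr)
      assume nz: "lkp \<mu> 1 \<noteq> 0"
      let ?g = "\<lambda>\<mu>'. sgl 0 (2 * lkp \<mu>' 1) :: nat \<Rightarrow>\<^sub>0 nat"
      have mmono: "mmono tau2 \<mu>' = (if lkp \<mu>' 0 = 0 then sgl (?g \<mu>') ((-1) ^ lkp \<mu>' 1) else 0)"
        if "\<mu>' \<in> kys G" for \<mu>' :: "nat \<Rightarrow>\<^sub>0 nat"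
      proof -
        have k3: "kys \<mu>' \<subseteq> {..<3}" using in_vars_mono_le[OF G(1), of 3] that unfolding in_vars_def by simp
        have "lkp \<mu>' 2 = 0" using in_vars_lookup0[OF G(1) that] by simp
        then show ?thesis
          by (simp add: mono3[OF k3] tau2_def neg_pow_sgl power_0_left)
      qed
      have inj: "inj_on ?g {\<mu>' \<in> kys G. lkp \<mu>' 0 = 0}"
      proof (rule inj_onI)
        fix x y assume x: "x \<in> {\<mu>' \<in> kys G. lkp \<mu>' 0 = 0}" and y: "y \<in> {\<mu>' \<in> kys G. lkp \<mu>' 0 = 0}"
          and e: "?g x = ?g y"
        have "lkp (?g x) 0 = lkp (?g y) 0" using e by simp
        then have e1: "lkp x 1 = lkp y 1" by (simp add: lookup_single)
        show "x = y"
        proof (rule poly_mapping_eqI)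
          fix i
          show "lkp x i = lkp y i"
          proof (cases "i < 2")
            case True
            then have "i = 0 \<or> i = 1" by auto
            then show ?thesis using x y e1 by auto
          next
            case False
            then show ?thesis using x y in_vars_lookup0[OF G(1)] by simp
          qed
        qed
      qed
      have "?g \<mu> \<in> kys (evp tau2 G)"
        by (rule key_eval_inj[OF mmono inj]) (use mu z in auto)
      then have "?g \<mu> \<in> kys (subst_t p)" using subst_eval_ph2[OF G(1)] G(2) by simp
      then have "lkp (?g \<mu>) 0 = 0" using pi unfolding indep_t_def by blast
      then show False using nz by (simp add: lookup_single)
    qed
    then show "\<mu> \<in> Piv2" using kv by (simp add: Piv2_def)
  qed
  then show ?thesis using G by blast
qed

theorem basis2: "is_basis proper_idx2 (proper2 :: _ \<Rightarrow> 'a::field_char_0 mpoly) (T 2)"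
proof (rule basis_transfer[where E="evp ph2" and B=B2 and N=2 and L=L2 and Piv=Piv2])
  show "hom (evp ph2)" by (rule hom_eval_map)
  show "evp ph2 (B2 i) = proper2 i \<and> in_vars 2 (B2 i :: 'a mpoly)" for i by (simp add: eval_B2 in_vars_B2)
  show "\<exists>G. in_vars 2 G \<and> kys G \<subseteq> Piv2 \<and> evp ph2 G = p" if "p \<in> T 2" for p :: "'a mpoly"
    using T2_rep[OF that] .
  show "G = G'" if "in_vars 2 G" "in_vars 2 G'" "evp ph2 G = evp ph2 G'" for G G' :: "'a mpoly"
    using ft2_inj that by blast
  show "proper2 ` proper_idx2 \<subseteq> T 2"
    using subalg_T[OF proper2_subalg] by auto
  show "\<exists>i\<in>proper_idx2. L2 i = \<mu>" if "\<mu> \<in> Piv2" for \<mu> using L2_surj that .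
  show "kys (B2 i :: 'a mpoly) \<subseteq> Piv2" for i by (rule keys_B2)
  show "lead_ok (B2 i :: 'a mpoly) (L2 i)" for i by (rule lead_B2)
  show "inj_on L2 proper_idx2" by (rule L2_inj)
  show "L2 i \<in> Piv2" for i by (rule L2_Piv)
  show "inj_on kap Piv2" by (rule inj_on_subset[OF kap_inj]) (auto simp: Piv2_def)
qed


definition phW :: "nat \<Rightarrow> 'a::comm_ring_1 mpoly" where
  "phW i = (if i = 2 then ph3 0 * ph3 1 - ph3 2 else ph3 i)"

definition alpha :: "nat \<Rightarrow> 'a::comm_ring_1 mpoly" where
  "alpha i = (if i = 2 then Var 0 * Var 1 - Var 2 else Var i)"

lemma less3: "(i::nat) < 3 \<Longrightarrow> i = 0 \<or> i = 1 \<or> i = 2" by auto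

lemma eval_alpha: "in_vars 3 G \<Longrightarrow> evp ph3 (evp alpha G) = evp phW (G :: 'a::comm_ring_1 mpoly)"
  unfolding eval_eval
  by (rule eval_cong_vars) (auto dest!: less3 simp: alpha_def phW_def eval_diff eval_mult)

lemma alpha_alpha: "in_vars 3 G \<Longrightarrow> evp alpha (evp alpha G) = (G :: 'a::comm_ring_1 mpoly)"
proof -
  assume G: "in_vars 3 G"
  have "evp alpha (evp alpha G) = evp Var G"
    unfolding eval_eval
    by (rule eval_cong_vars[OF G]) (auto dest!: less3 simp: alpha_def eval_diff eval_mult)
  then show ?thesis by (simp add: eval_Var_id)
qed

lemma in_vars_alpha: "in_vars 3 G \<Longrightarrow> in_vars 3 (evp alpha G)"
  by (rule in_vars_eval) (auto simp: alpha_def intro!: in_vars_diff in_vars_mult in_vars_Var)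

lemma phW_inj: "in_vars 3 G \<Longrightarrow> in_vars 3 G' \<Longrightarrow> evp phW G = evp phW G' \<Longrightarrow> G = (G' :: 'a::field_char_0 mpoly)"
proof -
  assume G: "in_vars 3 G" and G': "in_vars 3 G'" and e: "evp phW G = evp phW G'"
  have "evp alpha G = evp alpha G'"
    using ft3_inj[OF in_vars_alpha[OF G] in_vars_alpha[OF G']] e eval_alpha[OF G] eval_alpha[OF G'] by simp
  then have "evp alpha (evp alpha G) = evp alpha (evp alpha G')" by simp
  then show ?thesis using alpha_alpha[OF G] alpha_alpha[OF G'] by simp
qed

lemma phW_ex: "in_vars 3 p \<Longrightarrow> symmetric_poly 3 p \<Longrightarrow> \<exists>G. in_vars 3 G \<and> evp phW G = (p :: 'a::field_char_0 mpoly)"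
proof -
  assume pv: "in_vars 3 p" and ps: "symmetric_poly 3 p"
  obtain k where "bdd k p" using bdd_exists by blast
  then obtain H where H: "in_vars 3 H" "evp ph3 H = p" using ft3_ex[OF pv ps] by blast
  have "evp phW (evp alpha H) = p"
    using eval_alpha[OF in_vars_alpha[OF H(1)]] alpha_alpha[OF H(1)] H(2) by simp
  then show ?thesis using in_vars_alpha[OF H(1)] by blast
qed

definition tau3 :: "nat \<Rightarrow> 'a::comm_ring_1 mpoly" where
  "tau3 i = (if i = 0 then Var 2 else if i = 1 then - (Var 0 ^ 2) else 0)"

lemma subst_ph3_0: "subst_t (ph3 0) = (Var 2 :: 'a::comm_ring_1 mpoly)"
  by (simp add: ph3_def hom_add[OF hom_subst_t] subst_t_Var0 subst_t_Var1 subst_t_Var2)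
lemma subst_ph3_1: "subst_t (ph3 1) = (- (Var 0 ^ 2) :: 'a::comm_ring_1 mpoly)"
  by (simp add: ph3_def hom_add[OF hom_subst_t] hom_mult[OF hom_subst_t] subst_t_Var0 subst_t_Var1 subst_t_Var2
      power2_eq_square algebra_simps)
lemma subst_ph3_2: "subst_t (ph3 2) = (- (Var 0 ^ 2) * Var 2 :: 'a::comm_ring_1 mpoly)"
  by (simp add: ph3_def hom_mult[OF hom_subst_t] subst_t_Var0 subst_t_Var1 subst_t_Var2
      power2_eq_square algebra_simps)

lemma subst_eval_phW: "in_vars 3 G \<Longrightarrow> subst_t (evp phW G) = evp tau3 (G :: 'a::comm_ring_1 mpoly)"
  unfolding hom_eval_comp[OF hom_subst_t]
proof (rule eval_cong_vars)
  fix i :: nat assume "i < 3"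
  then have "i = 0 \<or> i = 1 \<or> i = 2" by auto
  then show "subst_t (phW i) = (tau3 i :: 'a mpoly)"
    by (auto simp: phW_def tau3_def hom_diff[OF hom_subst_t] hom_mult[OF hom_subst_t] subst_ph3_0 subst_ph3_1 subst_ph3_2 mult.commute)
qed

definition Piv3 :: "(nat \<Rightarrow>\<^sub>0 nat) set" where
  "Piv3 = {\<mu>. kys \<mu> \<subseteq> {..<3} \<and> (lkp \<mu> 2 = 0 \<longrightarrow> lkp \<mu> 1 = 0)}"

lemma keys_T3:
  assumes G: "in_vars 3 G" and T: "evp phW G \<in> T 3"
  shows "kys (G :: 'a::field_char_0 mpoly) \<subseteq> Piv3"
proof
  fix \<mu> assume mu: "\<mu> \<in> kys G"
  have pi: "indep_t (subst_t (evp phW G))" using T by (simp add: T_def mono_supersym_def)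
  have kv: "kys \<mu> \<subseteq> {..<3}" using G mu by (auto simp: in_vars_def)
  have "lkp \<mu> 1 = 0" if z: "lkp \<mu> 2 = 0"
  proof (rule ccontr)
    assume nz: "lkp \<mu> 1 \<noteq> 0"
    let ?g = "\<lambda>\<mu>'. sgl 2 (lkp \<mu>' 0) + sgl 0 (2 * lkp \<mu>' 1) :: nat \<Rightarrow>\<^sub>0 nat"
    have mmono: "mmono (tau3 :: nat \<Rightarrow> 'a mpoly) \<mu>' = (if lkp \<mu>' 2 = 0 then sgl (?g \<mu>') ((-1) ^ lkp \<mu>' 1) else 0)"
      if "\<mu>' \<in> kys G" for \<mu>' :: "nat \<Rightarrow>\<^sub>0 nat"
    proof -
      have k3: "kys \<mu>' \<subseteq> {..<3}" using G that unfolding in_vars_def by blast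
      have "Var 2 ^ lkp \<mu>' 0 * sgl (sgl 0 (2 * lkp \<mu>' 1)) ((-1) ^ lkp \<mu>' 1) = (sgl (?g \<mu>') ((-1) ^ lkp \<mu>' 1) :: 'a mpoly)"
        by (simp add: Var_pow mult_single)
      then show ?thesis
        by (simp add: mono3[OF k3] tau3_def neg_pow_sgl power_0_left)
    qed
    have inj: "inj_on ?g {\<mu>' \<in> kys G. lkp \<mu>' 2 = 0}"
    proof (rule inj_onI)
      fix x y assume x: "x \<in> {\<mu>' \<in> kys G. lkp \<mu>' 2 = 0}" and y: "y \<in> {\<mu>' \<in> kys G. lkp \<mu>' 2 = 0}"
        and e: "?g x = ?g y"
      have "lkp (?g x) 0 = lkp (?g y) 0" "lkp (?g x) 2 = lkp (?g y) 2" using e by simp_all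
      then have e1: "lkp x 1 = lkp y 1" and e0: "lkp x 0 = lkp y 0" by (simp_all add: lookup_add lookup_single)
      show "x = y"
      proof (rule poly_mapping_eqI)
        fix i
        show "lkp x i = lkp y i"
        proof (cases "i < 3")
          case True
          then have "i = 0 \<or> i = 1 \<or> i = 2" by auto
          then show ?thesis using x y e1 e0 by auto
        next
          case False
          then show ?thesis using x y in_vars_lookup0[OF G] by simp
        qed
      qed
    qed
    have "?g \<mu> \<in> kys (evp tau3 G)"
      by (rule key_eval_inj[OF mmono inj]) (use mu z in auto)
    then have "?g \<mu> \<in> kys (subst_t (evp phW G))" using subst_eval_phW[OF G] by simp
    then have "lkp (?g \<mu>) 0 = 0" using pi unfolding indep_t_def by blast
    then show False using nz by (simp add: lookup_add lookup_single)
  qed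
  then show "\<mu> \<in> Piv3" using kv by (simp add: Piv3_def)
qed

lemma T3_rep:
  assumes p: "p \<in> T 3"
  shows "\<exists>G. in_vars 3 G \<and> kys G \<subseteq> Piv3 \<and> evp phW G = (p :: 'a::field_char_0 mpoly)"
proof -
  have pv: "in_vars 3 p" and ps: "symmetric_poly 3 p" using p by (auto simp: T_def mono_supersym_def)
  obtain G where G: "in_vars 3 G" "evp phW G = p" using phW_ex[OF pv ps] by blast
  then show ?thesis using keys_T3[OF G(1)] p by blast
qed


declare single_one[simp del]

fun Q :: "nat \<Rightarrow> 'a::comm_ring_1 mpoly" where
  "Q 0 = Const 3"
| "Q (Suc 0) = Var 0"
| "Q (Suc (Suc 0)) = Var 0 * Var 0 - Const 2 * Var 1"
| "Q (Suc (Suc (Suc k))) = Var 0 * Q (Suc (Suc k)) - Var 1 * Q (Suc k) + (Var 0 * Var 1 - Var 2) * Q k"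

lemma eval_Q: "evp phW (Q k) = (psum 3 k :: 'a::comm_ring_1 mpoly)"
proof (induction k rule: Q.induct)
  case 1 then show ?case by (simp add: psum3 Const_numeral)
next
  case 2 then show ?case by (simp add: psum3 phW_def ph3_def)
next
  case 3 then show ?case by (simp add: psum3 phW_def ph3_def eval_diff eval_mult Const_numeral algebra_simps power2_eq_square)
next
  case (4 k)
  have e: "evp phW (Var 0 * Var 1 - Var 2) = (ph3 2 :: 'a mpoly)"
    by (simp add: phW_def eval_diff eval_mult)
  show ?case
    by (simp add: eval_add eval_diff eval_mult e 4[simplified] psum3)
       (simp add: phW_def ph3_def algebra_simps power_Suc)
qed

lemma in_vars_Q: "in_vars 3 (Q k)"
  by (induction k rule: Q.induct) (auto intro!: in_vars_Const in_vars_Var in_vars_diff in_vars_mult in_vars_add)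

lemma homog_Q: "homog k (Q k :: 'a::comm_ring_1 mpoly)"
proof (induction k rule: Q.induct)
  case 1 then show ?case using homog_Const by simp
next
  case 2 then show ?case using homog_Var0 by (simp add: One_nat_def)
next
  case 3
  have a: "homog 2 (Var 0 * Var 0 :: 'a mpoly)" using homog_mult[OF homog_Var0 homog_Var0] by simp
  have b: "homog 2 (Const 2 * Var 1 :: 'a mpoly)" using homog_mult[OF homog_Const homog_Var1] by (simp add: numeral_2_eq_2)
  show ?case using homog_diff[OF a b] by (simp add: numeral_2_eq_2)
next
  case (4 k)
  have a: "homog (Suc (Suc (Suc k))) (Var 0 * Q (Suc (Suc k)) :: 'a mpoly)"
    using homog_mult[OF homog_Var0, of "Suc (Suc k)" "Q (Suc (Suc k))"] 4 by (simp add: One_nat_def)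
  have b: "homog (Suc (Suc (Suc k))) (Var 1 * Q (Suc k) :: 'a mpoly)"
    using homog_mult[OF homog_Var1, of "Suc k" "Q (Suc k)"] 4 by simp
  have c1: "homog 3 (Var 0 * Var 1 :: 'a mpoly)" using homog_mult[OF homog_Var0 homog_Var1] by simp
  have c: "homog (Suc (Suc (Suc k))) ((Var 0 * Var 1 - Var 2) * Q k :: 'a mpoly)"
    using homog_mult[OF homog_diff[OF c1 homog_Var2], of k "Q k"] 4 by (simp add: numeral_3_eq_3)
  show ?case using homog_add[OF homog_diff[OF a b] c] by simp
qed

lemma Q_rec0:
  assumes "lkp \<nu> 0 = 0"
  shows "lkp (Q (Suc (Suc (Suc k)))) \<nu> = (- lkp (Var 1 * Q (Suc k)) \<nu> - lkp (Var 2 * Q k) \<nu> :: 'a::comm_ring_1)"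
proof -
  have "(Var 0 * Var 1 - Var 2) * Q k = Var 0 * (Var 1 * Q k) - Var 2 * (Q k :: 'a mpoly)"
    by (simp add: algebra_simps)
  then show ?thesis
    by (simp add: lookup_add lookup_minus lookup_Var_mult0[OF assms])
qed

lemma Qa: "lkp (Q (2 * Suc i)) (sgl 1 (Suc i)) = (2 * (-1) ^ Suc i :: 'a::comm_ring_1)"
proof (induction i)
  case 0
  have "lkp (Var 0 * Var 0 :: 'a mpoly) (sgl 1 1) = 0" by (rule lookup_Var_mult0) (simp add: lookup_single)
  moreover have "lkp (Var 1 :: 'a mpoly) (sgl 1 1) = 1" by (simp add: Var_def)
  ultimately show ?case by (simp add: numeral_2_eq_2 lookup_minus lookup_Const_mult One_nat_def)
next
  case (Suc i)
  have e: "2 * Suc (Suc i) = Suc (Suc (Suc (Suc (2 * i))))" by simp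
  have s1: "sgl 1 (Suc (Suc i)) = sgl 1 1 + sgl 1 (Suc i)" by (metis plus_1_eq_Suc single_add)
  have "lkp (Q (2 * Suc (Suc i))) (sgl 1 (Suc (Suc i))) =
        (- lkp (Var 1 * Q (Suc (Suc (2 * i)))) (sgl 1 1 + sgl 1 (Suc i)) - lkp (Var 2 * Q (Suc (2 * i))) (sgl 1 (Suc (Suc i))) :: 'a)"
    unfolding e by (subst Q_rec0) (simp_all add: lookup_single lookup_add s1)
  also have "\<dots> = - lkp (Q (2 * Suc i)) (sgl 1 (Suc i))"
    by (simp add: lookup_Var_mult lookup_Var_mult0 lookup_single)
  finally show ?case using Suc by simp
qed

lemma Qb: "lkp (Q (2*j+3)) (sgl 1 j + sgl 2 1) = ((-1) ^ Suc j * of_nat (2*j+3) :: 'a::comm_ring_1)"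
proof (induction j)
  case 0
  have e: "2 * 0 + 3 = Suc (Suc (Suc 0))" by simp
  have "lkp (Q (2 * 0 + 3)) (sgl 1 0 + sgl 2 1) =
      (- lkp (Var 1 * Q (Suc 0)) (sgl 2 1) - lkp (Var 2 * Q 0) (sgl 2 1 + 0) :: 'a)"
    unfolding e by (subst Q_rec0) (simp_all add: lookup_single)
  also have "\<dots> = - 3"
  proof -
    have a: "lkp (Var 1 * Q (Suc 0)) (sgl 2 1) = (0::'a)" by (rule lookup_Var_mult0) (simp add: lookup_single)
    have b: "lkp (Var 2 * Q 0) (sgl 2 1 + 0) = (lkp (Q 0) 0 :: 'a)" by (rule lookup_Var_mult)
    show ?thesis by (simp only: a b) (simp add: lookup_Const)
  qed
  finally show ?case by simp
next
  case (Suc j)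
  have e: "2 * Suc j + 3 = Suc (Suc (Suc (Suc (Suc (2 * j)))))" by simp
  have s1: "sgl 1 (Suc j) + sgl 2 1 = sgl 1 1 + (sgl 1 j + sgl 2 1)" by (metis plus_1_eq_Suc single_add add.assoc)
  have s2: "sgl 1 (Suc j) + sgl 2 1 = sgl 2 1 + sgl 1 (Suc j)" by (simp add: add.commute)
  have h1: "lkp (Var 1 * Q (Suc (Suc (Suc (2 * j))))) (sgl 1 (Suc j) + sgl 2 1) = (lkp (Q (2*j+3)) (sgl 1 j + sgl 2 1) :: 'a)"
    unfolding s1 by (simp add: lookup_Var_mult numeral_3_eq_3)
  have h2: "lkp (Var 2 * Q (Suc (Suc (2 * j)))) (sgl 1 (Suc j) + sgl 2 1) = (lkp (Q (2 * Suc j)) (sgl 1 (Suc j)) :: 'a)"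
    unfolding s2 by (simp add: lookup_Var_mult)
  have "lkp (Q (2 * Suc j + 3)) (sgl 1 (Suc j) + sgl 2 1) =
      (- lkp (Var 1 * Q (Suc (Suc (Suc (2 * j))))) (sgl 1 (Suc j) + sgl 2 1)
       - lkp (Var 2 * Q (Suc (Suc (2 * j)))) (sgl 1 (Suc j) + sgl 2 1) :: 'a)"
    unfolding e by (rule Q_rec0) (simp add: lookup_add lookup_single)
  also have "\<dots> = - lkp (Q (2*j+3)) (sgl 1 j + sgl 2 1) - lkp (Q (2 * Suc j)) (sgl 1 (Suc j))"
    by (simp only: h1 h2)
  also have "\<dots> = - ((-1) ^ Suc j * of_nat (2*j+3)) - 2 * (-1) ^ Suc j"
    by (simp only: Suc Qa)
  also have "\<dots> = (-1) ^ Suc (Suc j) * of_nat (2 * Suc j + 3)"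
    by (simp add: algebra_simps)
  finally show ?case .
qed


declare single_one[simp del]

lemma Q_T: "evp phW (Q (2*k+1)) \<in> T 3"
  unfolding eval_Q by (rule psum_T) simp

lemma keys_Q_odd: "kys (Q (2*k+1) :: 'a::field_char_0 mpoly) \<subseteq> Piv3"
  by (rule keys_T3[OF in_vars_Q Q_T])

lemma coef3_ne0: "((-1)^Suc j * of_nat (2*j+3) :: 'a::field_char_0) \<noteq> 0"
proof -
  have x: "(of_nat (2*j+3) :: 'a) \<noteq> 0" by (subst of_nat_eq_0_iff) simp
  have "\<forall>x::'a. x \<noteq> 0 \<longrightarrow> (-1)^Suc j * x \<noteq> 0" by simp
  then show ?thesis using x by blast
qed

lemma lkp_t3: "lkp (sgl 1 j + sgl 2 1 :: nat \<Rightarrow>\<^sub>0 nat) i = (if i = 1 then j else if i = 2 then 1 else 0)"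
  by (simp add: lookup_add lookup_single when_def)

lemma lead_Q: "lead_ok (Q (2*j+3) :: 'a::field_char_0 mpoly) (sgl 1 j + sgl 2 1)"
proof -
  let ?t = "sgl 1 j + sgl 2 1 :: nat \<Rightarrow>\<^sub>0 nat"
  have e: "lkp (Q (2*j+3) :: 'a mpoly) ?t = (-1)^Suc j * of_nat (2*j+3)" by (rule Qb)
  have c: "lkp (Q (2*j+3) :: 'a mpoly) ?t \<noteq> 0" unfolding e by (rule coef3_ne0)
  have "kap \<nu> < kap ?t" if nu: "\<nu> \<in> kys (Q (2*j+3) :: 'a mpoly)" "\<nu> \<noteq> ?t" for \<nu>
  proof -
    have w: "lkp \<nu> 0 + 2 * lkp \<nu> 1 + 3 * lkp \<nu> 2 = 2*j+3"
      using homog_Q[of "2*j+3", where 'a='a] nu(1) unfolding homog_def kap_def by auto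
    have odd: "2*j+3 = 2*(j+1)+1" by simp
    have pv: "lkp \<nu> 2 = 0 \<longrightarrow> lkp \<nu> 1 = 0"
      using keys_Q_odd[of "j+1", where 'a='a] nu(1) unfolding odd[symmetric] by (auto simp: Piv3_def)
    have hi: "lkp \<nu> i = 0" if "3 \<le> i" for i using in_vars_lookup0[OF in_vars_Q nu(1) that] .
    have le: "lkp \<nu> 1 \<le> j"
    proof (rule ccontr)
      assume "\<not> lkp \<nu> 1 \<le> j"
      then have "lkp \<nu> 2 = 0" using w by linarith
      then show False using pv \<open>\<not> lkp \<nu> 1 \<le> j\<close> by simp
    qed
    show ?thesis
    proof (cases "lkp \<nu> 1 = j")
      case False
      then show ?thesis using le w by (simp add: kap_def lkp_t3)
    next
      case True
      then have w3: "lkp \<nu> 0 + 3 * lkp \<nu> 2 = 3" using w by simp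
      show ?thesis
      proof (cases "lkp \<nu> 2 = 0")
        case True
        then show ?thesis using w \<open>lkp \<nu> 1 = j\<close> by (simp add: kap_def lkp_t3)
      next
        case False
        then have "lkp \<nu> 2 = 1" "lkp \<nu> 0 = 0" using w3 by auto
        then have "\<nu> = ?t"
        proof (intro poly_mapping_eqI)
          fix i assume "lkp \<nu> 2 = 1" "lkp \<nu> 0 = 0"
          then show "lkp \<nu> i = lkp ?t i" using \<open>lkp \<nu> 1 = j\<close> hi[of i]
            by (cases "i = 0"; cases "i = 1"; cases "i = 2") (auto simp: lkp_t3)
        qed
        then show ?thesis using nu(2) by simp
      qed
    qed
  qed
  then show ?thesis using c by (simp add: lead_ok_def)
qed

lemma lead_Q3: "lead_ok (Q 3 :: 'a::field_char_0 mpoly) (sgl 2 1)"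
  using lead_Q[of 0, where 'a='a] by simp

definition B3 :: "nat \<times> nat \<times> nat option \<Rightarrow> 'a::comm_ring_1 mpoly" where
  "B3 = (\<lambda>(c1, c3, e). Var 0 ^ c1 * Q 3 ^ c3 * (case e of None \<Rightarrow> 1 | Some m \<Rightarrow> Q (2*m+1)))"

definition L3 :: "nat \<times> nat \<times> nat option \<Rightarrow> (nat \<Rightarrow>\<^sub>0 nat)" where
  "L3 = (\<lambda>(c1, c3, e). sgl 0 c1 + sgl 2 c3 + (case e of None \<Rightarrow> 0 | Some m \<Rightarrow> sgl 1 (m - 1) + sgl 2 1))"

lemma lkp_L3: "lkp (L3 (c1, c3, e)) i = (if i = 0 then c1 else if i = 1 then (case e of None \<Rightarrow> 0 | Some m \<Rightarrow> m - 1)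
   else if i = 2 then c3 + (case e of None \<Rightarrow> 0 | Some m \<Rightarrow> 1) else 0)"
  by (cases e) (simp_all add: L3_def lookup_add lookup_single when_def)

lemma lead_B3:
  assumes "i \<in> proper_idx3"
  shows "lead_ok (B3 i :: 'a::field_char_0 mpoly) (L3 i)"
proof -
  obtain c1 c3 e where i: "i = (c1, c3, e)" by (cases i) auto
  have v: "lead_ok (Var 0 ^ c1 :: 'a mpoly) (sgl 0 c1)" by (simp add: Var_pow lead_single)
  have q: "lead_ok (Q 3 ^ c3 :: 'a mpoly) (sgl 2 c3)" using lead_pow[OF lead_Q3[where 'a='a], of c3] by simp
  have vq: "lead_ok (Var 0 ^ c1 * Q 3 ^ c3 :: 'a mpoly) (sgl 0 c1 + sgl 2 c3)" using lead_mult[OF v q] by simp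
  show ?thesis
  proof (cases e)
    case None then show ?thesis using vq i by (simp add: B3_def L3_def)
  next
    case (Some m)
    then have m: "m \<ge> 2" using assms i by (simp add: proper_idx3_def)
    then have e: "2*m+1 = 2*(m-1)+3" by simp
    have "lead_ok (Q (2*m+1) :: 'a mpoly) (sgl 1 (m-1) + sgl 2 1)" unfolding e by (rule lead_Q)
    from lead_mult[OF vq this] show ?thesis using i Some by (simp add: B3_def L3_def)
  qed
qed

lemma in_vars_B3: "in_vars 3 (B3 i)"
  by (cases i) (auto simp: B3_def split: option.splits intro!: in_vars_mult in_vars_pow in_vars_Var in_vars_Q in_vars_1)

lemma eval_B3: "evp phW (B3 i) = (proper3 i :: 'a::comm_ring_1 mpoly)"
proof -
  have v: "phW 0 = (psum 3 1 :: 'a mpoly)" by (simp add: phW_def ph3_def p1_3)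
  show ?thesis
    by (cases i) (auto simp: B3_def proper3_def eval_mult eval_pow eval_Q v split: option.splits)
qed

lemma proper3_subalg: "proper3 i \<in> subalg (range (\<lambda>k. psum 3 (2*k+1)))"
proof -
  have g1: "psum 3 1 \<in> subalg (range (\<lambda>k. psum 3 (2*k+1)))"
    by (rule subalg.gen) (rule range_eqI[of _ _ 0], simp)
  have g3: "psum 3 3 \<in> subalg (range (\<lambda>k. psum 3 (2*k+1)))"
    by (rule subalg.gen) (rule range_eqI[of _ _ 1], simp)
  have g: "psum 3 (2*m+1) \<in> subalg (range (\<lambda>k. psum 3 (2*k+1)))" for m
    by (rule subalg.gen) simp
  show ?thesis
    by (cases i) (auto simp: proper3_def split: option.splits intro!: subalg.mult subalg_pow g1 g3 g
          subalg.const[of 1, simplified])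
qed

lemma keys_B3: "kys (B3 i :: 'a::field_char_0 mpoly) \<subseteq> Piv3"
  using keys_T3[OF in_vars_B3, of i] subalg_T[OF proper3_subalg, of i] by (simp add: eval_B3)

lemma L3_Piv: "i \<in> proper_idx3 \<Longrightarrow> L3 i \<in> Piv3"
proof -
  assume "i \<in> proper_idx3"
  obtain c1 c3 e where i: "i = (c1, c3, e)" by (cases i) auto
  have "kys (L3 i) \<subseteq> {..<3}"
  proof
    fix k assume "k \<in> kys (L3 i)"
    then have "lkp (L3 (c1, c3, e)) k \<noteq> 0" using i by (simp add: in_keys_iff)
    then show "k \<in> {..<3}" unfolding lkp_L3 by (auto split: if_splits)
  qed
  moreover have "lkp (L3 i) 2 = 0 \<longrightarrow> lkp (L3 i) 1 = 0"
    using i by (cases e) (simp_all add: lkp_L3)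
  ultimately show ?thesis by (simp add: Piv3_def)
qed

lemma L3_inj: "inj_on L3 proper_idx3"
proof (rule inj_onI)
  fix i j assume i: "i \<in> proper_idx3" and j: "j \<in> proper_idx3" and e: "L3 i = L3 j"
  obtain a1 a3 e1 where ia: "i = (a1, a3, e1)" by (cases i) auto
  obtain b1 b3 e2 where jb: "j = (b1, b3, e2)" by (cases j) auto
  have l: "lkp (L3 i) k = lkp (L3 j) k" for k using e by simp
  have l0: "a1 = b1" using l[of 0] ia jb by (simp add: lkp_L3)
  have l1: "(case e1 of None \<Rightarrow> 0 | Some m \<Rightarrow> m - 1) = (case e2 of None \<Rightarrow> 0 | Some m \<Rightarrow> m - 1)"
    using l[of 1] ia jb by (simp add: lkp_L3)
  have l2: "a3 + (case e1 of None \<Rightarrow> 0 | Some m \<Rightarrow> 1) = b3 + (case e2 of None \<Rightarrow> 0 | Some m \<Rightarrow> 1)"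
    using l[of 2] ia jb by (simp add: lkp_L3)
  have "e1 = e2 \<and> a3 = b3"
    using i j ia jb l1 l2 by (cases e1; cases e2) (auto simp: proper_idx3_def)
  then show "i = j" using ia jb l0 by simp
qed

lemma L3_surj: "\<mu> \<in> Piv3 \<Longrightarrow> \<exists>i\<in>proper_idx3. L3 i = \<mu>"
proof -
  assume m: "\<mu> \<in> Piv3"
  then have kv: "kys \<mu> \<subseteq> {..<3}" and z: "lkp \<mu> 2 = 0 \<longrightarrow> lkp \<mu> 1 = 0" by (auto simp: Piv3_def)
  have hi: "lkp \<mu> i = 0" if "3 \<le> i" for i using kv that by (auto simp: in_keys_iff)
  show ?thesis
  proof (cases "lkp \<mu> 1 = 0")
    case True
    have "L3 (lkp \<mu> 0, lkp \<mu> 2, None) = \<mu>"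
    proof (rule poly_mapping_eqI)
      fix k show "lkp (L3 (lkp \<mu> 0, lkp \<mu> 2, None)) k = lkp \<mu> k"
        using True hi[of k] by (cases "k = 0"; cases "k = 1"; cases "k = 2") (auto simp: lkp_L3)
    qed
    then show ?thesis by (intro bexI[of _ "(lkp \<mu> 0, lkp \<mu> 2, None)"]) (auto simp: proper_idx3_def)
  next
    case False
    then have "lkp \<mu> 2 \<noteq> 0" using z by auto
    have "L3 (lkp \<mu> 0, lkp \<mu> 2 - 1, Some (lkp \<mu> 1 + 1)) = \<mu>"
    proof (rule poly_mapping_eqI)
      fix k show "lkp (L3 (lkp \<mu> 0, lkp \<mu> 2 - 1, Some (lkp \<mu> 1 + 1))) k = lkp \<mu> k"
        using \<open>lkp \<mu> 2 \<noteq> 0\<close> hi[of k] by (cases "k = 0"; cases "k = 1"; cases "k = 2") (auto simp: lkp_L3)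
    qed
    then show ?thesis using False
      by (intro bexI[of _ "(lkp \<mu> 0, lkp \<mu> 2 - 1, Some (lkp \<mu> 1 + 1))"]) (auto simp: proper_idx3_def)
  qed
qed

theorem basis3: "is_basis proper_idx3 (proper3 :: _ \<Rightarrow> 'a::field_char_0 mpoly) (T 3)"
proof (rule basis_transfer[where E="evp phW" and B=B3 and N=3 and L=L3 and Piv=Piv3])
  show "hom (evp phW)" by (rule hom_eval_map)
  show "evp phW (B3 i) = proper3 i \<and> in_vars 3 (B3 i :: 'a mpoly)" for i by (simp add: eval_B3 in_vars_B3)
  show "\<exists>G. in_vars 3 G \<and> kys G \<subseteq> Piv3 \<and> evp phW G = p" if "p \<in> T 3" for p :: "'a mpoly"
    using T3_rep[OF that] .
  show "G = G'" if "in_vars 3 G" "in_vars 3 G'" "evp phW G = evp phW G'" for G G' :: "'a mpoly"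
    using phW_inj that by blast
  show "proper3 ` proper_idx3 \<subseteq> T 3"
    using subalg_T[OF proper3_subalg] by auto
  show "\<exists>i\<in>proper_idx3. L3 i = \<mu>" if "\<mu> \<in> Piv3" for \<mu> using L3_surj that .
  show "kys (B3 i :: 'a mpoly) \<subseteq> Piv3" for i by (rule keys_B3)
  show "lead_ok (B3 i :: 'a mpoly) (L3 i)" if "i \<in> proper_idx3" for i by (rule lead_B3[OF that])
  show "inj_on L3 proper_idx3" by (rule L3_inj)
  show "L3 i \<in> Piv3" if "i \<in> proper_idx3" for i by (rule L3_Piv[OF that])
  show "inj_on kap Piv3" by (rule inj_on_subset[OF kap_inj]) (auto simp: Piv3_def)
qed


lemma basis_subalg:
  assumes "is_basis I b S" "\<And>i. b i \<in> subalg G"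
  shows "S \<subseteq> subalg G"
proof
  fix p assume "p \<in> S"
  then obtain a where "p = (\<Sum>i\<in>{i. a i \<noteq> 0}. Const (a i) * b i)"
    using assms(1) unfolding is_basis_def by blast
  moreover have "(\<Sum>i\<in>{i. a i \<noteq> 0}. Const (a i) * b i) \<in> subalg G"
    by (intro subalg_sum subalg.mult subalg.const assms(2))
  ultimately show "p \<in> subalg G" by simp
qed

theorem mainTheorem8:
  shows "(\<forall>n\<in>{2,3}. (T n :: 'a::field_char_0 mpoly set) = subalg (range (\<lambda>k. psum n (2*k+1))))
       \<and> is_basis proper_idx2 (proper2 :: _ \<Rightarrow> 'a mpoly) (T 2)
       \<and> is_basis proper_idx3 (proper3 :: _ \<Rightarrow> 'a mpoly) (T 3)"
proof (intro conjI ballI basis2 basis3)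
  fix n :: nat assume n: "n \<in> {2,3}"
  show "(T n :: 'a mpoly set) = subalg (range (\<lambda>k. psum n (2*k+1)))"
  proof
    show "subalg (range (\<lambda>k. psum n (2*k+1))) \<subseteq> (T n :: 'a mpoly set)"
      using subalg_T n by blast
    show "(T n :: 'a mpoly set) \<subseteq> subalg (range (\<lambda>k. psum n (2*k+1)))"
    proof (cases "n = 2")
      case True
      then show ?thesis using basis_subalg[OF basis2 proper2_subalg] by simp
    next
      case False
      then have "n = 3" using n by simp
      then show ?thesis using basis_subalg[OF basis3 proper3_subalg] by simp
    qed
  qed
qed


end
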